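(* Let $M\preccurlyeq N$ be models of a complete affine theory $T$, with $M$ extremally $\aleph_0$-saturated. If $D\subseteq N^n$ is definable, then $C=D\cap M^n$ is definable in $M$ and $d(\bar x,D)=d(\bar x,C)$ for every $\bar x\in M^n$; in particular $(M,d(\cdot,C))\preccurlyeq(N,d(\cdot,D))$. Moreover, if $D\neq\emptyset$ then $C\neq\emptyset$.
   Context: Affine continuous logic: $L$-structures are complete metric spaces $(M,d)$ with $d\le1$ and Lipschitz interpretations of function symbols and $[0,1]$-valued relation symbols. Affine formulas are built from $1$ and atomic formulas (including $d$) using only $r\cdot\phi$ ($r\in\mathbb R$), $\phi+\psi$, $\inf_x$, $\sup_x$; $M\preccurlyeq N$ means every affine formula with parameters from $M$ has the same value in $M$ and $N$ (and for expansions by predicates, also the formulas in the expanded language). For $A\subseteq M$, an $n$-type over $A$ is a maximal set of conditions with parameters from $A$ satisfiable with the theory of $(M,a)_{a\in A}$, identified with a positive normalized linear functional on formulas; a type is extreme if it is an extreme point of the convex set $S_n(A)$. $M$ is extremally $\aleph_0$-saturated if for every finite $A\subseteq M$ every extreme type in $S_n(A)$ is realized in $M$. A predicate $P:N^n\to\mathbb R$ is definable (without parameters) if it is a uniform limit of $\phi_k^N$ for affine formulas $\phi_k$. A closed $D\subseteq N^n$ is definable if $\bar x\mapsto d(\bar x,D)=\inf_{\bar a\in D}d(\bar x,\bar a)$ is definable (with the convention that the infimum over the empty set of a predicate equals its sup-norm). *)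

theory Defs
  imports "HOL-Analysis.Analysis"
begin

datatype 'f trm = Var nat | Fn 'f "'f trm list"

datatype ('f, 'r) afm =
    One
  | Dst "'f trm" "'f trm"
  | Rel 'r "'f trm list"
  | Scl real "('f, 'r) afm"
  | Pls "('f, 'r) afm" "('f, 'r) afm"
  | InfQ nat "('f, 'r) afm"
  | SupQ nat "('f, 'r) afm"

fun wf_trm :: "('f \<Rightarrow> nat) \<Rightarrow> 'f trm \<Rightarrow> bool" where
  "wf_trm af (Var i) = True"
| "wf_trm af (Fn f ts) = (length ts = af f \<and> (\<forall>t\<in>set ts. wf_trm af t))"

fun wf_fm :: "('f \<Rightarrow> nat) \<Rightarrow> ('r \<Rightarrow> nat) \<Rightarrow> ('f, 'r) afm \<Rightarrow> bool" where
  "wf_fm af ar One = True"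
| "wf_fm af ar (Dst t u) = (wf_trm af t \<and> wf_trm af u)"
| "wf_fm af ar (Rel r ts) = (length ts = ar r \<and> (\<forall>t\<in>set ts. wf_trm af t))"
| "wf_fm af ar (Scl c \<phi>) = wf_fm af ar \<phi>"
| "wf_fm af ar (Pls \<phi> \<psi>) = (wf_fm af ar \<phi> \<and> wf_fm af ar \<psi>)"
| "wf_fm af ar (InfQ x \<phi>) = wf_fm af ar \<phi>"
| "wf_fm af ar (SupQ x \<phi>) = wf_fm af ar \<phi>"

fun fv_trm :: "'f trm \<Rightarrow> nat set" where
  "fv_trm (Var i) = {i}"
| "fv_trm (Fn f ts) = (\<Union>t\<in>set ts. fv_trm t)"

fun fv :: "('f, 'r) afm \<Rightarrow> nat set" where
  "fv One = {}"
| "fv (Dst t u) = fv_trm t \<union> fv_trm u"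
| "fv (Rel r ts) = (\<Union>t\<in>set ts. fv_trm t)"
| "fv (Scl c \<phi>) = fv \<phi>"
| "fv (Pls \<phi> \<psi>) = fv \<phi> \<union> fv \<psi>"
| "fv (InfQ x \<phi>) = fv \<phi> - {x}"
| "fv (SupQ x \<phi>) = fv \<phi> - {x}"

record ('a, 'f, 'r) struc =
  sc_carrier :: "'a set"
  sc_d :: "'a \<Rightarrow> 'a \<Rightarrow> real"
  sc_fn :: "'f \<Rightarrow> 'a list \<Rightarrow> 'a"
  sc_rel :: "'r \<Rightarrow> 'a list \<Rightarrow> real"

definition tuples :: "'a set \<Rightarrow> nat \<Rightarrow> 'a list set" where
  "tuples S n = {xs. length xs = n \<and> set xs \<subseteq> S}"

definition tdist :: "('a, 'f, 'r, 'z) struc_scheme \<Rightarrow> 'a list \<Rightarrow> 'a list \<Rightarrow> real" where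
  "tdist S xs ys = (\<Sum>i<length xs. sc_d S (xs ! i) (ys ! i))"

fun teval :: "('a, 'f, 'r, 'z) struc_scheme \<Rightarrow> (nat \<Rightarrow> 'a) \<Rightarrow> 'f trm \<Rightarrow> 'a" where
  "teval S \<rho> (Var i) = \<rho> i"
| "teval S \<rho> (Fn f ts) = sc_fn S f (map (teval S \<rho>) ts)"

fun eval :: "('a, 'f, 'r, 'z) struc_scheme \<Rightarrow> ('f, 'r) afm \<Rightarrow> (nat \<Rightarrow> 'a) \<Rightarrow> real" where
  "eval S One \<rho> = 1"
| "eval S (Dst t u) \<rho> = sc_d S (teval S \<rho> t) (teval S \<rho> u)"
| "eval S (Rel r ts) \<rho> = sc_rel S r (map (teval S \<rho>) ts)"
| "eval S (Scl c \<phi>) \<rho> = c * eval S \<phi> \<rho>"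
| "eval S (Pls \<phi> \<psi>) \<rho> = eval S \<phi> \<rho> + eval S \<psi> \<rho>"
| "eval S (InfQ x \<phi>) \<rho> = (INF a\<in>sc_carrier S. eval S \<phi> (\<rho>(x := a)))"
| "eval S (SupQ x \<phi>) \<rho> = (SUP a\<in>sc_carrier S. eval S \<phi> (\<rho>(x := a)))"

definition is_struc :: "('f \<Rightarrow> nat) \<Rightarrow> ('r \<Rightarrow> nat) \<Rightarrow> ('a, 'f, 'r) struc \<Rightarrow> bool" where
  "is_struc af ar S \<longleftrightarrow>
     (let C = sc_carrier S; d = sc_d S in
       C \<noteq> {}
     \<and> (\<forall>x\<in>C. \<forall>y\<in>C. 0 \<le> d x y \<and> d x y \<le> 1 \<and> d x y = d y x \<and> (d x y = 0 \<longleftrightarrow> x = y))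
     \<and> (\<forall>x\<in>C. \<forall>y\<in>C. \<forall>z\<in>C. d x z \<le> d x y + d y z)
     \<and> (\<forall>s::nat \<Rightarrow> 'a. (\<forall>i. s i \<in> C) \<and>
            (\<forall>e>0. \<exists>K. \<forall>m\<ge>K. \<forall>k\<ge>K. d (s m) (s k) < e)
          \<longrightarrow> (\<exists>x\<in>C. \<forall>e>0. \<exists>K. \<forall>m\<ge>K. d (s m) x < e))
     \<and> (\<forall>f. (\<forall>xs\<in>tuples C (af f). sc_fn S f xs \<in> C)
          \<and> (\<exists>L. \<forall>xs\<in>tuples C (af f). \<forall>ys\<in>tuples C (af f).
                  d (sc_fn S f xs) (sc_fn S f ys) \<le> L * tdist S xs ys))
     \<and> (\<forall>r. (\<forall>xs\<in>tuples C (ar r). 0 \<le> sc_rel S r xs \<and> sc_rel S r xs \<le> 1)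
          \<and> (\<exists>L. \<forall>xs\<in>tuples C (ar r). \<forall>ys\<in>tuples C (ar r).
                  \<bar>sc_rel S r xs - sc_rel S r ys\<bar> \<le> L * tdist S xs ys)))"

definition elem_ext :: "('f \<Rightarrow> nat) \<Rightarrow> ('r \<Rightarrow> nat) \<Rightarrow> ('a, 'f, 'r, 'z) struc_scheme
     \<Rightarrow> ('a, 'f, 'r, 'z) struc_scheme \<Rightarrow> bool" where
  "elem_ext af ar M N \<longleftrightarrow>
     sc_carrier M \<subseteq> sc_carrier N \<and>
     (\<forall>\<phi> \<rho>. wf_fm af ar \<phi> \<and> range \<rho> \<subseteq> sc_carrier M \<longrightarrow> eval M \<phi> \<rho> = eval N \<phi> \<rho>)"

definition fmfuns :: "('f \<Rightarrow> nat) \<Rightarrow> ('r \<Rightarrow> nat) \<Rightarrow> ('a, 'f, 'r) struc \<Rightarrow> nat \<Rightarrow> 'a set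
     \<Rightarrow> ('a list \<Rightarrow> real) set" where
  "fmfuns af ar M n A =
     {(\<lambda>xs. eval M \<phi> (\<lambda>i. if i < n then xs ! i else \<rho> i)) | \<phi> \<rho>.
        wf_fm af ar \<phi> \<and> (\<forall>i\<in>fv \<phi>. n \<le> i \<longrightarrow> \<rho> i \<in> A)}"

text \<open>The type space S_n(A), with types identified with positive normalized linear
  functionals on formulas (positivity relative to the theory of (M,a)_(a\<in>A):
  a formula which is \<ge> 0 on all of M^n gets a value \<ge> 0).  Functionals are taken
  to vanish off the space of formula-functions.\<close>
definition types :: "('f \<Rightarrow> nat) \<Rightarrow> ('r \<Rightarrow> nat) \<Rightarrow> ('a, 'f, 'r) struc \<Rightarrow> nat \<Rightarrow> 'a set
     \<Rightarrow> (('a list \<Rightarrow> real) \<Rightarrow> real) set" where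
  "types af ar M n A =
     {p. let F = fmfuns af ar M n A in
          (\<forall>f. f \<notin> F \<longrightarrow> p f = 0)
        \<and> (\<forall>f\<in>F. \<forall>g\<in>F. p (\<lambda>xs. f xs + g xs) = p f + p g)
        \<and> (\<forall>f\<in>F. \<forall>c. p (\<lambda>xs. c * f xs) = c * p f)
        \<and> p (\<lambda>xs. 1) = 1
        \<and> (\<forall>f\<in>F. (\<forall>xs\<in>tuples (sc_carrier M) n. 0 \<le> f xs) \<longrightarrow> 0 \<le> p f)}"

definition extreme_in :: "('b \<Rightarrow> real) \<Rightarrow> ('b \<Rightarrow> real) set \<Rightarrow> bool" where
  "extreme_in p K \<longleftrightarrow> p \<in> K \<and>
     (\<forall>q1\<in>K. \<forall>q2\<in>K. \<forall>t::real. 0 < t \<and> t < 1 \<and> p = (\<lambda>f. t * q1 f + (1 - t) * q2 f)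
        \<longrightarrow> q1 = q2)"

definition realizes :: "('f \<Rightarrow> nat) \<Rightarrow> ('r \<Rightarrow> nat) \<Rightarrow> ('a, 'f, 'r) struc \<Rightarrow> nat \<Rightarrow> 'a set
     \<Rightarrow> 'a list \<Rightarrow> (('a list \<Rightarrow> real) \<Rightarrow> real) \<Rightarrow> bool" where
  "realizes af ar M n A xs p \<longleftrightarrow> (\<forall>f\<in>fmfuns af ar M n A. p f = f xs)"

definition ext_sat :: "('f \<Rightarrow> nat) \<Rightarrow> ('r \<Rightarrow> nat) \<Rightarrow> ('a, 'f, 'r) struc \<Rightarrow> bool" where
  "ext_sat af ar M \<longleftrightarrow>
     (\<forall>A n p. finite A \<and> A \<subseteq> sc_carrier M \<and> extreme_in p (types af ar M n A)
        \<longrightarrow> (\<exists>xs\<in>tuples (sc_carrier M) n. realizes af ar M n A xs p))"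

definition def_pred :: "('f \<Rightarrow> nat) \<Rightarrow> ('r \<Rightarrow> nat) \<Rightarrow> ('a, 'f, 'r) struc \<Rightarrow> nat
     \<Rightarrow> ('a list \<Rightarrow> real) \<Rightarrow> bool" where
  "def_pred af ar S n P \<longleftrightarrow>
     (\<exists>\<phi> :: nat \<Rightarrow> ('f, 'r) afm. (\<forall>k. wf_fm af ar (\<phi> k) \<and> fv (\<phi> k) \<subseteq> {..<n}) \<and>
        (\<forall>e>0. \<exists>K. \<forall>k\<ge>K. \<forall>xs\<in>tuples (sc_carrier S) n.
            \<bar>eval S (\<phi> k) (\<lambda>i. xs ! i) - P xs\<bar> \<le> e))"

text \<open>Distance to a set of n-tuples, with the convention that the infimum over the
  empty set is the sup-norm of the predicate (x,y) \<mapsto> d(x,y) on S^n \<times> S^n.\<close>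
definition tsetdist :: "('a, 'f, 'r, 'z) struc_scheme \<Rightarrow> nat \<Rightarrow> 'a list set \<Rightarrow> 'a list \<Rightarrow> real" where
  "tsetdist S n X xs =
     (if X = {} then (SUP p\<in>tuples (sc_carrier S) n \<times> tuples (sc_carrier S) n. tdist S (fst p) (snd p))
      else (INF ys\<in>X. tdist S xs ys))"

definition closed_tuples :: "('a, 'f, 'r, 'z) struc_scheme \<Rightarrow> nat \<Rightarrow> 'a list set \<Rightarrow> bool" where
  "closed_tuples S n X \<longleftrightarrow> X \<subseteq> tuples (sc_carrier S) n \<and>
     (\<forall>xs\<in>tuples (sc_carrier S) n. (\<forall>e>0. \<exists>ys\<in>X. tdist S xs ys < e) \<longrightarrow> xs \<in> X)"

definition def_set :: "('f \<Rightarrow> nat) \<Rightarrow> ('r \<Rightarrow> nat) \<Rightarrow> ('a, 'f, 'r) struc \<Rightarrow> nat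
     \<Rightarrow> 'a list set \<Rightarrow> bool" where
  "def_set af ar S n X \<longleftrightarrow> closed_tuples S n X \<and> def_pred af ar S n (tsetdist S n X)"

text \<open>The expanded language has relation symbols 'r option; None is the new
  n-ary predicate symbol.\<close>
definition exp_ar :: "('r \<Rightarrow> nat) \<Rightarrow> nat \<Rightarrow> 'r option \<Rightarrow> nat" where
  "exp_ar ar n r = (case r of None \<Rightarrow> n | Some r' \<Rightarrow> ar r')"

definition expand :: "('a, 'f, 'r) struc \<Rightarrow> ('a list \<Rightarrow> real) \<Rightarrow> ('a, 'f, 'r option) struc" where
  "expand S P = \<lparr>sc_carrier = sc_carrier S, sc_d = sc_d S, sc_fn = sc_fn S,
      sc_rel = (\<lambda>r. case r of None \<Rightarrow> P | Some r' \<Rightarrow> sc_rel S r')\<rparr>"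

end

theory Submission
  imports Defs
begin
lemma teval_fv: "(\<forall>i\<in>fv_trm t. \<rho> i = \<rho>' i) \<Longrightarrow> teval S \<rho> t = teval S \<rho>' t"
proof (induction t)
  case (Var x) then show ?case by simp
next
  case (Fn f ts) then show ?case by (auto intro!: arg_cong[where f="sc_fn S f"] map_cong)
qed

lemma eval_fv: "(\<forall>i\<in>fv \<phi>. \<rho> i = \<rho>' i) \<Longrightarrow> eval S \<phi> \<rho> = eval S \<phi> \<rho>'"
proof (induction \<phi> arbitrary: \<rho> \<rho>')
  case (Dst t u) then show ?case using teval_fv[of t \<rho> \<rho>' S] teval_fv[of u \<rho> \<rho>' S] by simp
next
  case (Rel r ts) then show ?case
    by (auto intro!: arg_cong[where f="sc_rel S r"] map_cong teval_fv)
next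
  case (Pls \<phi>1 \<phi>2)
  have "eval S \<phi>1 \<rho> = eval S \<phi>1 \<rho>'" using Pls.prems by (intro Pls.IH(1)) auto
  moreover have "eval S \<phi>2 \<rho> = eval S \<phi>2 \<rho>'" using Pls.prems by (intro Pls.IH(2)) auto
  ultimately show ?case by simp
next
  case (InfQ x \<phi>)
  have "\<And>a. eval S \<phi> (\<rho>(x:=a)) = eval S \<phi> (\<rho>'(x:=a))" using InfQ by (intro InfQ.IH) auto
  then show ?case by simp
next
  case (SupQ x \<phi>)
  have "\<And>a. eval S \<phi> (\<rho>(x:=a)) = eval S \<phi> (\<rho>'(x:=a))" using SupQ by (intro SupQ.IH) auto
  then show ?case by simp
qed auto

lemma finite_fv_trm: "finite (fv_trm t)"
  by (induction t) auto

fun rent :: "(nat \<Rightarrow> nat) \<Rightarrow> 'f trm \<Rightarrow> 'f trm" where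
  "rent \<sigma> (Var i) = Var (\<sigma> i)"
| "rent \<sigma> (Fn f ts) = Fn f (map (rent \<sigma>) ts)"

fun ren :: "(nat \<Rightarrow> nat) \<Rightarrow> ('f,'r) afm \<Rightarrow> ('f,'r) afm" where
  "ren \<sigma> One = One"
| "ren \<sigma> (Dst t u) = Dst (rent \<sigma> t) (rent \<sigma> u)"
| "ren \<sigma> (Rel r ts) = Rel r (map (rent \<sigma>) ts)"
| "ren \<sigma> (Scl c \<phi>) = Scl c (ren \<sigma> \<phi>)"
| "ren \<sigma> (Pls \<phi> \<psi>) = Pls (ren \<sigma> \<phi>) (ren \<sigma> \<psi>)"
| "ren \<sigma> (InfQ x \<phi>) = InfQ (\<sigma> x) (ren \<sigma> \<phi>)"
| "ren \<sigma> (SupQ x \<phi>) = SupQ (\<sigma> x) (ren \<sigma> \<phi>)"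

lemma teval_rent: "teval S \<rho> (rent \<sigma> t) = teval S (\<rho> \<circ> \<sigma>) t"
  by (induction t) (auto intro!: arg_cong[where f="sc_fn S _"] map_cong)

lemma wf_rent: "wf_trm af (rent \<sigma> t) = wf_trm af t"
  by (induction t) auto

lemma fv_rent: "fv_trm (rent \<sigma> t) = \<sigma> ` fv_trm t"
  by (induction t) auto

lemma wf_ren: "wf_fm af ar (ren \<sigma> \<phi>) = wf_fm af ar \<phi>"
  by (induction \<phi>) (auto simp: wf_rent)

lemma upd_comp_inj: "inj \<sigma> \<Longrightarrow> (\<rho>(\<sigma> x := a)) \<circ> \<sigma> = (\<rho> \<circ> \<sigma>)(x := a)"
  by (auto simp: fun_eq_iff inj_eq)

lemma eval_ren: "inj \<sigma> \<Longrightarrow> eval S (ren \<sigma> \<phi>) \<rho> = eval S \<phi> (\<rho> \<circ> \<sigma>)"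
proof (induction \<phi> arbitrary: \<rho>)
  case (Rel r ts) then show ?case
    by (auto intro!: arg_cong[where f="sc_rel S r"] simp: teval_rent comp_def)
next
  case (InfQ x \<phi>)
  have "\<And>a. eval S (ren \<sigma> \<phi>) (\<rho>(\<sigma> x := a)) = eval S \<phi> ((\<rho> \<circ> \<sigma>)(x := a))"
    using InfQ by (simp only: upd_comp_inj)
  then show ?case by (simp only: ren.simps eval.simps)
next
  case (SupQ x \<phi>)
  have "\<And>a. eval S (ren \<sigma> \<phi>) (\<rho>(\<sigma> x := a)) = eval S \<phi> ((\<rho> \<circ> \<sigma>)(x := a))"
    using SupQ by (simp only: upd_comp_inj)
  then show ?case by (simp only: ren.simps eval.simps)
qed (auto simp: teval_rent)

lemma fv_ren: "inj \<sigma> \<Longrightarrow> fv (ren \<sigma> \<phi>) = \<sigma> ` fv \<phi>"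
  by (induction \<phi>) (auto simp: fv_rent image_set_diff)

fun bv :: "('f,'r) afm \<Rightarrow> nat set" where
  "bv One = {}"
| "bv (Dst t u) = {}"
| "bv (Rel r ts) = {}"
| "bv (Scl c \<phi>) = bv \<phi>"
| "bv (Pls \<phi> \<psi>) = bv \<phi> \<union> bv \<psi>"
| "bv (InfQ x \<phi>) = insert x (bv \<phi>)"
| "bv (SupQ x \<phi>) = insert x (bv \<phi>)"

lemma bv_ren: "bv (ren \<sigma> \<phi>) = \<sigma> ` bv \<phi>"
  by (induction \<phi>) auto

fun sbt :: "(nat \<Rightarrow> 'f trm) \<Rightarrow> 'f trm \<Rightarrow> 'f trm" where
  "sbt s (Var i) = s i"
| "sbt s (Fn f ts) = Fn f (map (sbt s) ts)"

fun sb :: "(nat \<Rightarrow> 'f trm) \<Rightarrow> ('f,'r) afm \<Rightarrow> ('f,'r) afm" where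
  "sb s One = One"
| "sb s (Dst t u) = Dst (sbt s t) (sbt s u)"
| "sb s (Rel r ts) = Rel r (map (sbt s) ts)"
| "sb s (Scl c \<phi>) = Scl c (sb s \<phi>)"
| "sb s (Pls \<phi> \<psi>) = Pls (sb s \<phi>) (sb s \<psi>)"
| "sb s (InfQ x \<phi>) = InfQ x (sb (s(x := Var x)) \<phi>)"
| "sb s (SupQ x \<phi>) = SupQ x (sb (s(x := Var x)) \<phi>)"

lemma teval_sbt: "teval S \<rho> (sbt s t) = teval S (\<lambda>j. teval S \<rho> (s j)) t"
  by (induction t) (auto intro!: arg_cong[where f="sc_fn S _"] map_cong)

lemma wf_sbt: "(\<forall>j. wf_trm af (s j)) \<Longrightarrow> wf_trm af (sbt s t) = wf_trm af t"
  by (induction t) auto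

lemma wf_sb: "(\<forall>j. wf_trm af (s j)) \<Longrightarrow> wf_fm af ar (sb s \<phi>) = wf_fm af ar \<phi>"
proof (induction \<phi> arbitrary: s)
  case (InfQ x \<phi>)
  have "\<forall>j. wf_trm af ((s(x := Var x)) j)" using InfQ.prems by auto
  then show ?case using InfQ.IH by simp
next
  case (SupQ x \<phi>)
  have "\<forall>j. wf_trm af ((s(x := Var x)) j)" using SupQ.prems by auto
  then show ?case using SupQ.IH by simp
qed (auto simp: wf_sbt)

lemma eval_sb_aux:
  assumes "\<forall>x\<in>insert y (bv \<phi>). \<forall>j. j \<noteq> x \<longrightarrow> x \<notin> fv_trm (s j)"
  shows "\<forall>x\<in>bv \<phi>. \<forall>j. j \<noteq> x \<longrightarrow> x \<notin> fv_trm ((s(y := Var y)) j)"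
    and "(\<lambda>j. teval S (\<rho>(y := a)) ((s(y := Var y)) j)) = (\<lambda>j. teval S \<rho> (s j))(y := a)"
proof -
  show "\<forall>x\<in>bv \<phi>. \<forall>j. j \<noteq> x \<longrightarrow> x \<notin> fv_trm ((s(y := Var y)) j)" using assms by auto
  show "(\<lambda>j. teval S (\<rho>(y := a)) ((s(y := Var y)) j)) = (\<lambda>j. teval S \<rho> (s j))(y := a)"
  proof
    fix j show "teval S (\<rho>(y := a)) ((s(y := Var y)) j) = ((\<lambda>j. teval S \<rho> (s j))(y := a)) j"
    proof (cases "j = y")
      case False
      then have "y \<notin> fv_trm (s j)" using assms by auto
      then show ?thesis using False by (auto intro: teval_fv)
    qed simp
  qed
qed

lemma eval_sb: "\<forall>x\<in>bv \<phi>. \<forall>j. j \<noteq> x \<longrightarrow> x \<notin> fv_trm (s j) \<Longrightarrow>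
   eval S (sb s \<phi>) \<rho> = eval S \<phi> (\<lambda>j. teval S \<rho> (s j))"
proof (induction \<phi> arbitrary: s \<rho>)
  case (InfQ y \<phi>)
  have c1: "\<forall>x\<in>bv \<phi>. \<forall>j. j \<noteq> x \<longrightarrow> x \<notin> fv_trm ((s(y := Var y)) j)"
    using eval_sb_aux(1)[of y \<phi> s] InfQ.prems by simp
  have "\<And>a. eval S (sb (s(y := Var y)) \<phi>) (\<rho>(y := a)) = eval S \<phi> ((\<lambda>j. teval S \<rho> (s j))(y := a))"
  proof -
    fix a
    have "eval S (sb (s(y := Var y)) \<phi>) (\<rho>(y := a)) = eval S \<phi> (\<lambda>j. teval S (\<rho>(y := a)) ((s(y := Var y)) j))"
      using InfQ.IH[OF c1] .
    also have "(\<lambda>j. teval S (\<rho>(y := a)) ((s(y := Var y)) j)) = (\<lambda>j. teval S \<rho> (s j))(y := a)"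
      by (rule eval_sb_aux(2)[where \<phi>=\<phi>]) (use InfQ.prems in simp)
    finally show "eval S (sb (s(y := Var y)) \<phi>) (\<rho>(y := a)) = eval S \<phi> ((\<lambda>j. teval S \<rho> (s j))(y := a))" .
  qed
  then show ?case by (simp only: sb.simps eval.simps)
next
  case (SupQ y \<phi>)
  have c1: "\<forall>x\<in>bv \<phi>. \<forall>j. j \<noteq> x \<longrightarrow> x \<notin> fv_trm ((s(y := Var y)) j)"
    using eval_sb_aux(1)[of y \<phi> s] SupQ.prems by simp
  have "\<And>a. eval S (sb (s(y := Var y)) \<phi>) (\<rho>(y := a)) = eval S \<phi> ((\<lambda>j. teval S \<rho> (s j))(y := a))"
  proof -
    fix a
    have "eval S (sb (s(y := Var y)) \<phi>) (\<rho>(y := a)) = eval S \<phi> (\<lambda>j. teval S (\<rho>(y := a)) ((s(y := Var y)) j))"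
      using SupQ.IH[OF c1] .
    also have "(\<lambda>j. teval S (\<rho>(y := a)) ((s(y := Var y)) j)) = (\<lambda>j. teval S \<rho> (s j))(y := a)"
      by (rule eval_sb_aux(2)[where \<phi>=\<phi>]) (use SupQ.prems in simp)
    finally show "eval S (sb (s(y := Var y)) \<phi>) (\<rho>(y := a)) = eval S \<phi> ((\<lambda>j. teval S \<rho> (s j))(y := a))" .
  qed
  then show ?case by (simp only: sb.simps eval.simps)
qed (auto simp: teval_sbt intro!: arg_cong[where f="sc_rel S _"])

lemma struc_ne: "is_struc af ar S \<Longrightarrow> sc_carrier S \<noteq> {}"
  by (simp add: is_struc_def Let_def)

lemma struc_d: "is_struc af ar S \<Longrightarrow> x \<in> sc_carrier S \<Longrightarrow> y \<in> sc_carrier S \<Longrightarrow>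
   0 \<le> sc_d S x y \<and> sc_d S x y \<le> 1 \<and> sc_d S x y = sc_d S y x \<and> (sc_d S x y = 0 \<longleftrightarrow> x = y)"
  by (simp add: is_struc_def Let_def)

lemma struc_fn: "is_struc af ar S \<Longrightarrow> xs \<in> tuples (sc_carrier S) (af f) \<Longrightarrow> sc_fn S f xs \<in> sc_carrier S"
  by (simp add: is_struc_def Let_def)

lemma struc_rel: "is_struc af ar S \<Longrightarrow> xs \<in> tuples (sc_carrier S) (ar r) \<Longrightarrow>
   0 \<le> sc_rel S r xs \<and> sc_rel S r xs \<le> 1"
  by (simp add: is_struc_def Let_def)

lemma teval_closed_gen:
  assumes "\<And>f xs. xs \<in> tuples C (af f) \<Longrightarrow> sc_fn S f xs \<in> C"
  shows "wf_trm af t \<Longrightarrow> range \<rho> \<subseteq> C \<Longrightarrow> teval S \<rho> t \<in> C"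
proof (induction t)
  case (Var x) then show ?case by auto
next
  case (Fn f ts)
  have "map (teval S \<rho>) ts \<in> tuples C (af f)" using Fn by (auto simp: tuples_def)
  then show ?case using assms by simp
qed

lemma teval_closed: "is_struc af ar S \<Longrightarrow> wf_trm af t \<Longrightarrow> range \<rho> \<subseteq> sc_carrier S \<Longrightarrow> teval S \<rho> t \<in> sc_carrier S"
  by (rule teval_closed_gen[where af=af]) (auto intro: struc_fn)

lemma map_teval_tuples: "is_struc af ar S \<Longrightarrow> \<forall>t\<in>set ts. wf_trm af t \<Longrightarrow> range \<rho> \<subseteq> sc_carrier S \<Longrightarrow>
   map (teval S \<rho>) ts \<in> tuples (sc_carrier S) (length ts)"
  by (auto simp: tuples_def intro: teval_closed)

lemma range_upd: "range \<rho> \<subseteq> C \<Longrightarrow> a \<in> C \<Longrightarrow> range (\<rho>(x := a)) \<subseteq> C"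
  by auto

fun bnd :: "('f,'r) afm \<Rightarrow> real" where
  "bnd One = 1"
| "bnd (Dst t u) = 1"
| "bnd (Rel r ts) = 1"
| "bnd (Scl c \<phi>) = \<bar>c\<bar> * bnd \<phi>"
| "bnd (Pls \<phi> \<psi>) = bnd \<phi> + bnd \<psi>"
| "bnd (InfQ x \<phi>) = bnd \<phi>"
| "bnd (SupQ x \<phi>) = bnd \<phi>"

lemma INF_abs_le: "A \<noteq> {} \<Longrightarrow> (\<And>a. a \<in> A \<Longrightarrow> \<bar>g a\<bar> \<le> (b::real)) \<Longrightarrow> \<bar>INF a\<in>A. g a\<bar> \<le> b"
proof -
  assume A: "A \<noteq> {}" and g: "\<And>a. a \<in> A \<Longrightarrow> \<bar>g a\<bar> \<le> b"
  have bb: "bdd_below (g ` A)"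
  proof (rule bdd_belowI[where m="-b"])
    fix y assume "y \<in> g ` A" then obtain a where "a\<in>A" "y = g a" by auto
    then show "-b \<le> y" using g[of a] by (simp add: abs_le_iff)
  qed
  obtain a where a: "a \<in> A" using A by auto
  have "(INF a\<in>A. g a) \<le> g a" using bb a by (rule cINF_lower)
  moreover have "-b \<le> (INF a\<in>A. g a)"
  proof (rule cINF_greatest[OF A])
    fix a assume "a\<in>A" then show "-b \<le> g a" using g[of a] by (simp add: abs_le_iff)
  qed
  ultimately show ?thesis using g[OF a] by (auto simp: abs_le_iff)
qed

lemma SUP_abs_le: "A \<noteq> {} \<Longrightarrow> (\<And>a. a \<in> A \<Longrightarrow> \<bar>g a\<bar> \<le> (b::real)) \<Longrightarrow> \<bar>SUP a\<in>A. g a\<bar> \<le> b"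
proof -
  assume A: "A \<noteq> {}" and g: "\<And>a. a \<in> A \<Longrightarrow> \<bar>g a\<bar> \<le> b"
  have bb: "bdd_above (g ` A)"
  proof (rule bdd_aboveI[where M="b"])
    fix y assume "y \<in> g ` A" then obtain a where "a\<in>A" "y = g a" by auto
    then show "y \<le> b" using g[of a] by (simp add: abs_le_iff)
  qed
  obtain a where a: "a \<in> A" using A by auto
  have "g a \<le> (SUP a\<in>A. g a)" using a bb by (rule cSUP_upper)
  moreover have "(SUP a\<in>A. g a) \<le> b"
  proof (rule cSUP_least[OF A])
    fix a assume "a\<in>A" then show "g a \<le> b" using g[of a] by (simp add: abs_le_iff)
  qed
  ultimately show ?thesis using g[OF a] by (auto simp: abs_le_iff)
qed

lemma eval_bnd: "is_struc af ar S \<Longrightarrow> wf_fm af ar \<phi> \<Longrightarrow> range \<rho> \<subseteq> sc_carrier S \<Longrightarrow> \<bar>eval S \<phi> \<rho>\<bar> \<le> bnd \<phi>"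
proof (induction \<phi> arbitrary: \<rho>)
  case (Dst t u)
  then show ?case using struc_d[OF Dst(1) teval_closed[OF Dst(1) _ Dst(3), of t] teval_closed[OF Dst(1) _ Dst(3), of u]] by auto
next
  case (Rel r ts)
  then have "map (teval S \<rho>) ts \<in> tuples (sc_carrier S) (ar r)" using map_teval_tuples[of af ar S ts \<rho>] by auto
  then show ?case using struc_rel[OF Rel(1)] by auto
next
  case (Scl c \<phi>)
  then show ?case by (auto simp: abs_mult intro: mult_left_mono)
next
  case (Pls \<phi> \<psi>)
  then show ?case by (auto intro: order.trans[OF abs_triangle_ineq] add_mono)
next
  case (InfQ x \<phi>)
  show ?case using InfQ.prems by (auto intro!: INF_abs_le struc_ne InfQ.IH range_upd)
next
  case (SupQ x \<phi>)
  show ?case using SupQ.prems by (auto intro!: SUP_abs_le struc_ne SupQ.IH range_upd)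
qed auto

lemma INF_approx:
  fixes f g :: "'a \<Rightarrow> real"
  assumes A: "A \<noteq> {}" and fg: "\<And>a. a \<in> A \<Longrightarrow> \<bar>f a - g a\<bar> \<le> e" and gb: "\<And>a. a \<in> A \<Longrightarrow> \<bar>g a\<bar> \<le> b"
  shows "\<bar>(INF a\<in>A. f a) - (INF a\<in>A. g a)\<bar> \<le> e"
proof -
  have bg: "bdd_below (g ` A)" using gb by (intro bdd_belowI[where m="-b"]) (force simp: abs_le_iff)
  have bf: "bdd_below (f ` A)" using gb fg by (intro bdd_belowI[where m="-b-e"]) (force simp: abs_le_iff)
  have 1: "(INF a\<in>A. g a) - e \<le> (INF a\<in>A. f a)"
  proof (rule cINF_greatest[OF A])
    fix a assume a: "a \<in> A"
    have "(INF a\<in>A. g a) \<le> g a" using bg a by (rule cINF_lower)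
    then show "(INF a\<in>A. g a) - e \<le> f a" using fg[OF a] by (auto simp: abs_le_iff)
  qed
  have 2: "(INF a\<in>A. f a) - e \<le> (INF a\<in>A. g a)"
  proof (rule cINF_greatest[OF A])
    fix a assume a: "a \<in> A"
    have "(INF a\<in>A. f a) \<le> f a" using bf a by (rule cINF_lower)
    then show "(INF a\<in>A. f a) - e \<le> g a" using fg[OF a] by (auto simp: abs_le_iff)
  qed
  show ?thesis using 1 2 by (auto simp: abs_le_iff)
qed

lemma SUP_approx:
  fixes f g :: "'a \<Rightarrow> real"
  assumes A: "A \<noteq> {}" and fg: "\<And>a. a \<in> A \<Longrightarrow> \<bar>f a - g a\<bar> \<le> e" and gb: "\<And>a. a \<in> A \<Longrightarrow> \<bar>g a\<bar> \<le> b"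
  shows "\<bar>(SUP a\<in>A. f a) - (SUP a\<in>A. g a)\<bar> \<le> e"
proof -
  have bg: "bdd_above (g ` A)" using gb by (intro bdd_aboveI[where M="b"]) (force simp: abs_le_iff)
  have bf: "bdd_above (f ` A)" using gb fg by (intro bdd_aboveI[where M="b+e"]) (force simp: abs_le_iff)
  have 1: "(SUP a\<in>A. f a) \<le> (SUP a\<in>A. g a) + e"
  proof (rule cSUP_least[OF A])
    fix a assume a: "a \<in> A"
    have "g a \<le> (SUP a\<in>A. g a)" using a bg by (rule cSUP_upper)
    then show "f a \<le> (SUP a\<in>A. g a) + e" using fg[OF a] by (auto simp: abs_le_iff)
  qed
  have 2: "(SUP a\<in>A. g a) \<le> (SUP a\<in>A. f a) + e"
  proof (rule cSUP_least[OF A])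
    fix a assume a: "a \<in> A"
    have "f a \<le> (SUP a\<in>A. f a)" using a bf by (rule cSUP_upper)
    then show "g a \<le> (SUP a\<in>A. f a) + e" using fg[OF a] by (auto simp: abs_le_iff)
  qed
  show ?thesis using 1 2 by (auto simp: abs_le_iff)
qed

fun dsum :: "nat \<Rightarrow> nat \<Rightarrow> ('f,'r) afm" where
  "dsum n 0 = Scl 0 One"
| "dsum n (Suc m) = Pls (dsum n m) (Dst (Var (n + m)) (Var m))"

lemma eval_dsum: "eval S (dsum n m) \<rho> = (\<Sum>i<m. sc_d S (\<rho> (n + i)) (\<rho> i))"
  by (induction m) auto

lemma wf_dsum: "wf_fm af ar (dsum n m)"
  by (induction m) auto

lemma fv_dsum: "fv (dsum n m) \<subseteq> {..<n+m} \<inter> ({..<m} \<union> {n..})"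
  by (induction m) auto

locale setting =
  fixes af :: "'f \<Rightarrow> nat" and ar :: "'r \<Rightarrow> nat"
    and M N :: "('a, 'f, 'r) struc" and n :: nat and D :: "'a list set"
  assumes sM: "is_struc af ar M" and sN: "is_struc af ar N"
    and ee: "elem_ext af ar M N"
    and es: "ext_sat af ar M"
    and dD: "def_set af ar N n D"
begin

abbreviation "CM \<equiv> sc_carrier M"
abbreviation "CN \<equiv> sc_carrier N"

lemma sub: "CM \<subseteq> CN" using ee by (simp add: elem_ext_def)

lemma ee_eval: "wf_fm af ar \<phi> \<Longrightarrow> range \<rho> \<subseteq> CM \<Longrightarrow> eval M \<phi> \<rho> = eval N \<phi> \<rho>"
  using ee by (simp add: elem_ext_def)

lemma d_agree: assumes "a \<in> CM" "b \<in> CM" shows "sc_d N a b = sc_d M a b"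
proof -
  let ?\<rho> = "\<lambda>i::nat. if i = 0 then a else b"
  have "range ?\<rho> \<subseteq> CM" using assms by auto
  from ee_eval[OF _ this, of "Dst (Var 0) (Var 1)"] show ?thesis by simp
qed

lemma tuples_sub: "xs \<in> tuples CM k \<Longrightarrow> xs \<in> tuples CN k"
  using sub by (auto simp: tuples_def)

lemma tdist_agree: assumes "xs \<in> tuples CM k" "ys \<in> tuples CM k"
  shows "tdist N xs ys = tdist M xs ys"
  unfolding tdist_def
proof (rule sum.cong)
  fix i assume "i \<in> {..<length xs}"
  then show "sc_d N (xs ! i) (ys ! i) = sc_d M (xs ! i) (ys ! i)"
    using assms by (intro d_agree) (auto simp: tuples_def)
qed simp

lemma tuples_nth: "xs \<in> tuples C k \<Longrightarrow> i < k \<Longrightarrow> xs ! i \<in> C"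
  by (auto simp: tuples_def)

lemma tdist_nonneg: assumes "is_struc af ar S" "xs \<in> tuples (sc_carrier S) k" "ys \<in> tuples (sc_carrier S) k"
  shows "0 \<le> tdist S xs ys"
  unfolding tdist_def
proof (rule sum_nonneg)
  fix i assume "i \<in> {..<length xs}"
  then have "i < k" using assms by (simp add: tuples_def)
  then show "0 \<le> sc_d S (xs ! i) (ys ! i)" using struc_d[OF assms(1) tuples_nth[OF assms(2)] tuples_nth[OF assms(3)]] by blast
qed

lemma tdist_le: assumes "is_struc af ar S" "xs \<in> tuples (sc_carrier S) k" "ys \<in> tuples (sc_carrier S) k"
  shows "tdist S xs ys \<le> k"
proof -
  have "tdist S xs ys \<le> (\<Sum>i<length xs. 1)" unfolding tdist_def
  proof (rule sum_mono)
    fix i assume "i \<in> {..<length xs}"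
    then have "i < k" using assms by (simp add: tuples_def)
    then show "sc_d S (xs ! i) (ys ! i) \<le> 1" using struc_d[OF assms(1) tuples_nth[OF assms(2)] tuples_nth[OF assms(3)]] by blast
  qed
  then show ?thesis using assms by (simp add: tuples_def)
qed

lemma tdist_self: assumes "is_struc af ar S" "xs \<in> tuples (sc_carrier S) k"
  shows "tdist S xs xs = 0"
  unfolding tdist_def
proof (rule sum.neutral, rule ballI)
  fix i assume "i \<in> {..<length xs}"
  then have "i < k" using assms by (simp add: tuples_def)
  then show "sc_d S (xs ! i) (xs ! i) = 0" using struc_d[OF assms(1) tuples_nth[OF assms(2)] tuples_nth[OF assms(2)]] by auto
qed

lemma transfer:
  "wf_fm af ar ch \<Longrightarrow> range \<rho> \<subseteq> CM \<Longrightarrow>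
   (\<forall>\<rho>'. range \<rho>' \<subseteq> CM \<and> (\<forall>i\<ge>m. \<rho>' i = \<rho> i) \<longrightarrow> 0 \<le> eval M ch \<rho>') \<Longrightarrow>
   range \<rho>' \<subseteq> CN \<Longrightarrow> (\<forall>i\<ge>m. \<rho>' i = \<rho> i) \<Longrightarrow> 0 \<le> eval N ch \<rho>'"
proof (induction m arbitrary: ch \<rho>')
  case 0
  then have "\<rho>' = \<rho>" by auto
  then show ?case using 0 ee_eval[of ch \<rho>] by auto
next
  case (Suc m)
  have w: "wf_fm af ar (InfQ m ch)" using Suc by simp
  have h: "\<forall>\<rho>''. range \<rho>'' \<subseteq> CM \<and> (\<forall>i\<ge>m. \<rho>'' i = \<rho> i) \<longrightarrow> 0 \<le> eval M (InfQ m ch) \<rho>''"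
  proof (intro allI impI)
    fix \<rho>'' assume a: "range \<rho>'' \<subseteq> CM \<and> (\<forall>i\<ge>m. \<rho>'' i = \<rho> i)"
    have "0 \<le> (INF b\<in>CM. eval M ch (\<rho>''(m := b)))"
    proof (rule cINF_greatest)
      show "CM \<noteq> {}" using sM by (rule struc_ne)
      fix b assume "b \<in> CM"
      then have "range (\<rho>''(m := b)) \<subseteq> CM" using a by (intro range_upd) auto
      moreover have "\<forall>i\<ge>Suc m. (\<rho>''(m := b)) i = \<rho> i" using a by auto
      ultimately show "0 \<le> eval M ch (\<rho>''(m := b))" using Suc.prems(3) by blast
    qed
    then show "0 \<le> eval M (InfQ m ch) \<rho>''" by simp
  qed
  let ?r = "\<rho>'(m := \<rho> m)"
  have "\<rho> m \<in> CM" using Suc.prems(2) by auto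
  then have r1: "range ?r \<subseteq> CN" using Suc.prems(4) sub by (intro range_upd) auto
  have r2: "\<forall>i\<ge>m. ?r i = \<rho> i" using Suc.prems by auto
  have "0 \<le> eval N (InfQ m ch) ?r" by (rule Suc.IH[OF w Suc.prems(2) h r1 r2])
  then have i: "0 \<le> (INF b\<in>CN. eval N ch (?r(m := b)))" by simp
  have bb: "bdd_below ((\<lambda>b. eval N ch (?r(m := b))) ` CN)"
  proof (rule bdd_belowI[where m="- bnd ch"])
    fix y assume "y \<in> (\<lambda>b. eval N ch (?r(m := b))) ` CN"
    then obtain b where b: "b \<in> CN" "y = eval N ch (?r(m := b))" by auto
    have "\<bar>eval N ch (?r(m := b))\<bar> \<le> bnd ch" using sN Suc.prems(1) range_upd[OF r1 b(1)] by (rule eval_bnd)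
    then show "- bnd ch \<le> y" using b by auto
  qed
  have "\<rho>' m \<in> CN" using Suc.prems by auto
  from cINF_lower[OF bb this] i have "0 \<le> eval N ch (?r(m := \<rho>' m))" by linarith
  then show ?case by simp
qed

end

context setting
begin

definition env :: "'a list \<Rightarrow> (nat \<Rightarrow> 'a) \<Rightarrow> nat \<Rightarrow> 'a" where
  "env xs \<rho> = (\<lambda>i. if i < n then xs ! i else \<rho> i)"

definition isrep :: "'a set \<Rightarrow> ('f,'r) afm \<Rightarrow> (nat \<Rightarrow> 'a) \<Rightarrow> ('a list \<Rightarrow> real) \<Rightarrow> bool" where
  "isrep A \<phi> \<rho> f \<longleftrightarrow> wf_fm af ar \<phi> \<and> (\<forall>i\<in>fv \<phi>. n \<le> i \<longrightarrow> \<rho> i \<in> A) \<and> f = (\<lambda>xs. eval M \<phi> (env xs \<rho>))"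

lemma F_iff: "f \<in> fmfuns af ar M n A \<longleftrightarrow> (\<exists>\<phi> \<rho>. isrep A \<phi> \<rho> f)"
  unfolding fmfuns_def isrep_def env_def by blast

definition m0 :: 'a where "m0 = (SOME a. a \<in> CM)"

lemma m0: "m0 \<in> CM"
  unfolding m0_def using struc_ne[OF sM] by (auto intro: someI)

lemma env_range: "xs \<in> tuples C n \<Longrightarrow> range \<rho> \<subseteq> C \<Longrightarrow> range (env xs \<rho>) \<subseteq> C"
  by (auto simp: env_def tuples_def)

definition fixr :: "('f,'r) afm \<Rightarrow> (nat \<Rightarrow> 'a) \<Rightarrow> nat \<Rightarrow> 'a" where
  "fixr \<phi> \<rho> = (\<lambda>i. if i \<in> fv \<phi> \<and> n \<le> i then \<rho> i else m0)"

lemma eval_fixr: "eval S \<phi> (env xs (fixr \<phi> \<rho>)) = eval S \<phi> (env xs \<rho>)"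
  by (rule eval_fv) (auto simp: env_def fixr_def)

context
  fixes A assumes A: "A \<subseteq> CM"
begin

lemma rep_fix: assumes "isrep A \<phi> \<rho> f"
  shows "isrep A \<phi> (fixr \<phi> \<rho>) f" "range (fixr \<phi> \<rho>) \<subseteq> CM"
proof -
  show "isrep A \<phi> (fixr \<phi> \<rho>) f" using assms unfolding isrep_def eval_fixr by (auto simp: fixr_def)
  show "range (fixr \<phi> \<rho>) \<subseteq> CM" using assms A m0 unfolding isrep_def fixr_def by auto
qed

lemma merge:
  assumes r1: "isrep A \<phi>1 \<rho>1 f1" and r2: "isrep A \<phi>2 \<rho>2 f2"
  obtains \<psi>1 \<psi>2 \<rho> where "range \<rho> \<subseteq> CM" "isrep A \<psi>1 \<rho> f1" "isrep A \<psi>2 \<rho> f2"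
    "\<And>(S::('a,'f,'r) struc) xs. eval S \<psi>1 (env xs \<rho>) = eval S \<phi>1 (env xs \<rho>1)"
    "\<And>(S::('a,'f,'r) struc) xs. eval S \<psi>2 (env xs \<rho>) = eval S \<phi>2 (env xs \<rho>2)"
proof -
  define q1 where "q1 = fixr \<phi>1 \<rho>1"
  define q2 where "q2 = fixr \<phi>2 \<rho>2"
  define \<sigma>1 :: "nat \<Rightarrow> nat" where "\<sigma>1 = (\<lambda>i. if i < n then i else n + 2 * (i - n))"
  define \<sigma>2 :: "nat \<Rightarrow> nat" where "\<sigma>2 = (\<lambda>i. if i < n then i else Suc (n + 2 * (i - n)))"
  define \<rho> where "\<rho> = (\<lambda>j. if j < n then m0 else if even (j - n) then q1 (n + (j - n) div 2) else q2 (n + (j - n) div 2))"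
  have i1: "inj \<sigma>1" unfolding \<sigma>1_def inj_def by (auto split: if_splits)
  have i2: "inj \<sigma>2" unfolding \<sigma>2_def inj_def by (auto split: if_splits)
  have c1: "env xs \<rho> \<circ> \<sigma>1 = env xs q1" for xs
  proof
    fix i show "(env xs \<rho> \<circ> \<sigma>1) i = env xs q1 i"
    proof (cases "i < n")
      case True then show ?thesis by (simp add: env_def \<sigma>1_def)
    next
      case False
      have "\<sigma>1 i = n + 2 * (i - n)" using False by (simp add: \<sigma>1_def)
      moreover have "\<rho> (n + 2 * (i - n)) = q1 i" using False by (simp add: \<rho>_def)
      ultimately show ?thesis using False by (simp add: env_def)
    qed
  qed
  have c2: "env xs \<rho> \<circ> \<sigma>2 = env xs q2" for xs
  proof
    fix i show "(env xs \<rho> \<circ> \<sigma>2) i = env xs q2 i"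
    proof (cases "i < n")
      case True then show ?thesis by (simp add: env_def \<sigma>2_def)
    next
      case False
      have "\<sigma>2 i = Suc (n + 2 * (i - n))" using False by (simp add: \<sigma>2_def)
      moreover have "\<rho> (Suc (n + 2 * (i - n))) = q2 i" using False by (simp add: \<rho>_def)
      ultimately show ?thesis using False by (simp add: env_def)
    qed
  qed
  have e1: "eval S (ren \<sigma>1 \<phi>1) (env xs \<rho>) = eval S \<phi>1 (env xs \<rho>1)" for S :: "('a,'f,'r) struc" and xs
    by (simp add: eval_ren[OF i1] c1 q1_def eval_fixr)
  have e2: "eval S (ren \<sigma>2 \<phi>2) (env xs \<rho>) = eval S \<phi>2 (env xs \<rho>2)" for S :: "('a,'f,'r) struc" and xs
    by (simp add: eval_ren[OF i2] c2 q2_def eval_fixr)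
  have rq1: "range q1 \<subseteq> CM" "isrep A \<phi>1 q1 f1" using rep_fix[OF r1] q1_def by auto
  have rq2: "range q2 \<subseteq> CM" "isrep A \<phi>2 q2 f2" using rep_fix[OF r2] q2_def by auto
  have rr: "range \<rho> \<subseteq> CM" using rq1 rq2 m0 unfolding \<rho>_def by auto
  have p1: "isrep A (ren \<sigma>1 \<phi>1) \<rho> f1"
    unfolding isrep_def
  proof (intro conjI)
    show "wf_fm af ar (ren \<sigma>1 \<phi>1)" using r1 by (simp add: wf_ren isrep_def)
    show "\<forall>i\<in>fv (ren \<sigma>1 \<phi>1). n \<le> i \<longrightarrow> \<rho> i \<in> A"
    proof (intro ballI impI)
      fix i assume "i \<in> fv (ren \<sigma>1 \<phi>1)" "n \<le> i"
      then obtain k where k: "k \<in> fv \<phi>1" "i = \<sigma>1 k" by (auto simp: fv_ren[OF i1])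
      have kn: "n \<le> k"
      proof (rule ccontr)
        assume "\<not> n \<le> k" then have "i = k" using k by (simp add: \<sigma>1_def)
        then show False using \<open>n \<le> i\<close> \<open>\<not> n \<le> k\<close> by simp
      qed
      have "\<rho> i = (env [] \<rho> \<circ> \<sigma>1) k" using \<open>n \<le> i\<close> k(2) by (simp add: env_def)
      also have "\<dots> = env [] q1 k" by (simp add: c1)
      also have "\<dots> = q1 k" using kn by (simp add: env_def)
      also have "\<dots> = \<rho>1 k" using k(1) kn by (simp add: q1_def fixr_def)
      finally show "\<rho> i \<in> A" using k(1) kn r1 unfolding isrep_def by auto
    qed
    show "f1 = (\<lambda>xs. eval M (ren \<sigma>1 \<phi>1) (env xs \<rho>))" using r1 by (simp add: e1 isrep_def)
  qed
  have p2: "isrep A (ren \<sigma>2 \<phi>2) \<rho> f2"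
    unfolding isrep_def
  proof (intro conjI)
    show "wf_fm af ar (ren \<sigma>2 \<phi>2)" using r2 by (simp add: wf_ren isrep_def)
    show "\<forall>i\<in>fv (ren \<sigma>2 \<phi>2). n \<le> i \<longrightarrow> \<rho> i \<in> A"
    proof (intro ballI impI)
      fix i assume "i \<in> fv (ren \<sigma>2 \<phi>2)" "n \<le> i"
      then obtain k where k: "k \<in> fv \<phi>2" "i = \<sigma>2 k" by (auto simp: fv_ren[OF i2])
      have kn: "n \<le> k"
      proof (rule ccontr)
        assume "\<not> n \<le> k" then have "i = k" using k by (simp add: \<sigma>2_def)
        then show False using \<open>n \<le> i\<close> \<open>\<not> n \<le> k\<close> by simp
      qed
      have "\<rho> i = (env [] \<rho> \<circ> \<sigma>2) k" using \<open>n \<le> i\<close> k(2) by (simp add: env_def)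
      also have "\<dots> = env [] q2 k" by (simp add: c2)
      also have "\<dots> = q2 k" using kn by (simp add: env_def)
      also have "\<dots> = \<rho>2 k" using k(1) kn by (simp add: q2_def fixr_def)
      finally show "\<rho> i \<in> A" using k(1) kn r2 unfolding isrep_def by auto
    qed
    show "f2 = (\<lambda>xs. eval M (ren \<sigma>2 \<phi>2) (env xs \<rho>))" using r2 by (simp add: e2 isrep_def)
  qed
  show ?thesis using that[OF rr p1 p2 e1 e2] .
qed

lemma WD:
  assumes r1: "isrep A \<phi>1 \<rho>1 f" and r2: "isrep A \<phi>2 \<rho>2 g"
    and le: "\<forall>xs\<in>tuples CM n. f xs \<le> g xs" and z: "z \<in> tuples CN n"
  shows "eval N \<phi>1 (env z \<rho>1) \<le> eval N \<phi>2 (env z \<rho>2)"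
proof -
  obtain \<rho> \<psi>1 \<psi>2 where rr: "range \<rho> \<subseteq> CM" and p1: "isrep A \<psi>1 \<rho> f" and p2: "isrep A \<psi>2 \<rho> g"
    and e1: "\<And>(S::('a,'f,'r) struc) xs. eval S \<psi>1 (env xs \<rho>) = eval S \<phi>1 (env xs \<rho>1)"
    and e2: "\<And>(S::('a,'f,'r) struc) xs. eval S \<psi>2 (env xs \<rho>) = eval S \<phi>2 (env xs \<rho>2)"
    using merge[OF r1 r2] by metis
  let ?ch = "Pls \<psi>2 (Scl (-1) \<psi>1)"
  have w: "wf_fm af ar ?ch" using p1 p2 by (simp add: isrep_def)
  have hyp: "\<forall>\<rho>'. range \<rho>' \<subseteq> CM \<and> (\<forall>i\<ge>n. \<rho>' i = \<rho> i) \<longrightarrow> 0 \<le> eval M ?ch \<rho>'"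
  proof (intro allI impI)
    fix \<rho>' assume a: "range \<rho>' \<subseteq> CM \<and> (\<forall>i\<ge>n. \<rho>' i = \<rho> i)"
    define xs where "xs = map \<rho>' [0..<n]"
    have xs: "xs \<in> tuples CM n" using a by (auto simp: xs_def tuples_def)
    have "env xs \<rho> = \<rho>'" using a by (auto simp: fun_eq_iff env_def xs_def)
    then have "eval M ?ch \<rho>' = g xs - f xs" using p1 p2 by (auto simp: isrep_def)
    then show "0 \<le> eval M ?ch \<rho>'" using le xs by auto
  qed
  have "range (env z \<rho>) \<subseteq> CN" using z rr sub by (intro env_range) auto
  moreover have "\<forall>i\<ge>n. env z \<rho> i = \<rho> i" by (simp add: env_def)
  ultimately have "0 \<le> eval N ?ch (env z \<rho>)" using transfer[OF w rr hyp] by blast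
  then show ?thesis by (simp add: e1 e2)
qed

definition tp :: "'a list \<Rightarrow> ('a list \<Rightarrow> real) \<Rightarrow> real" where
  "tp z f = (if \<exists>\<phi> \<rho>. isrep A \<phi> \<rho> f
     then eval N (fst (SOME r. isrep A (fst r) (snd r) f)) (env z (snd (SOME r. isrep A (fst r) (snd r) f)))
     else 0)"

lemma tp_rep: assumes r: "isrep A \<phi> \<rho> f" and z: "z \<in> tuples CN n"
  shows "tp z f = eval N \<phi> (env z \<rho>)"
proof -
  have "\<exists>r. isrep A (fst r) (snd r) f" using r by (intro exI[of _ "(\<phi>,\<rho>)"]) simp
  then have s: "isrep A (fst (SOME r. isrep A (fst r) (snd r) f)) (snd (SOME r. isrep A (fst r) (snd r) f)) f"
    by (rule someI_ex)
  have "tp z f = eval N (fst (SOME r. isrep A (fst r) (snd r) f)) (env z (snd (SOME r. isrep A (fst r) (snd r) f)))"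
    using r unfolding tp_def by auto
  also have "\<dots> = eval N \<phi> (env z \<rho>)"
    using WD[OF s r _ z] WD[OF r s _ z] by (auto intro: antisym)
  finally show ?thesis .
qed

lemma tp_M: assumes r: "isrep A \<phi> \<rho> f" and z: "z \<in> tuples CM n"
  shows "tp z f = f z"
proof -
  have r': "isrep A \<phi> (fixr \<phi> \<rho>) f" and rr: "range (fixr \<phi> \<rho>) \<subseteq> CM" using rep_fix[OF r] by auto
  have "tp z f = eval N \<phi> (env z (fixr \<phi> \<rho>))" using tp_rep[OF r' tuples_sub[OF z]] .
  also have "\<dots> = eval M \<phi> (env z (fixr \<phi> \<rho>))"
    using r' env_range[OF z rr] by (intro ee_eval[symmetric]) (auto simp: isrep_def)
  also have "\<dots> = f z" using r' by (simp add: isrep_def)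
  finally show ?thesis .
qed

lemma tp_types: assumes z: "z \<in> tuples CN n" shows "tp z \<in> types af ar M n A"
  unfolding types_def Let_def mem_Collect_eq
proof (intro conjI allI ballI impI)
  fix f assume "f \<notin> fmfuns af ar M n A"
  then show "tp z f = 0" by (simp add: tp_def F_iff)
next
  fix f g assume "f \<in> fmfuns af ar M n A" "g \<in> fmfuns af ar M n A"
  then obtain \<phi>1 \<rho>1 \<phi>2 \<rho>2 where r1: "isrep A \<phi>1 \<rho>1 f" and r2: "isrep A \<phi>2 \<rho>2 g" by (auto simp: F_iff)
  obtain \<psi>1 \<psi>2 \<rho> where p1: "isrep A \<psi>1 \<rho> f" and p2: "isrep A \<psi>2 \<rho> g"
    using merge[OF r1 r2] by metis
  have p: "isrep A (Pls \<psi>1 \<psi>2) \<rho> (\<lambda>xs. f xs + g xs)" using p1 p2 by (auto simp: isrep_def)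
  show "tp z (\<lambda>xs. f xs + g xs) = tp z f + tp z g"
    using tp_rep[OF p z] tp_rep[OF p1 z] tp_rep[OF p2 z] by simp
next
  fix f c assume "f \<in> fmfuns af ar M n A"
  then obtain \<phi> \<rho> where r: "isrep A \<phi> \<rho> f" by (auto simp: F_iff)
  have p: "isrep A (Scl c \<phi>) \<rho> (\<lambda>xs. c * f xs)" using r by (auto simp: isrep_def)
  show "tp z (\<lambda>xs. c * f xs) = c * tp z f" using tp_rep[OF p z] tp_rep[OF r z] by simp
next
  have p: "isrep A One (\<lambda>_. m0) (\<lambda>xs. 1)" by (simp add: isrep_def)
  show "tp z (\<lambda>xs. 1) = 1" using tp_rep[OF p z] by simp
next
  fix f assume "f \<in> fmfuns af ar M n A" and nn: "\<forall>xs\<in>tuples CM n. 0 \<le> f xs"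
  then obtain \<phi> \<rho> where r: "isrep A \<phi> \<rho> f" by (auto simp: F_iff)
  have p: "isrep A (Scl 0 One) (\<lambda>_. m0) (\<lambda>xs. 0)" by (simp add: isrep_def)
  show "0 \<le> tp z f" using WD[OF p r _ z] nn tp_rep[OF r z] by simp
qed

end
end

lemma closed_Collect_cimp: "(P \<Longrightarrow> closed {x. Q x}) \<Longrightarrow> closed {x. P \<longrightarrow> Q x}"
  by (cases P) auto

lemma cont_ev: "continuous_on UNIV (\<lambda>p::('b \<Rightarrow> real). p f)"
  by simp

lemma comb_le:
  fixes t a b m :: real
  assumes "0 < t" "t < 1" "t * a + (1 - t) * b \<le> m" "m \<le> a" "m \<le> b"
  shows "a \<le> m \<and> b \<le> m"
proof -
  have "(1 - t) * m \<le> (1 - t) * b" using assms by (intro mult_left_mono) auto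
  moreover have "t * m = m - (1 - t) * m" by (simp add: algebra_simps)
  ultimately have ta: "t * a \<le> t * m" using assms(3) by linarith
  have 1: "a \<le> m" using ta assms(1) by (simp only: mult_le_cancel_left_pos)
  have "t * m \<le> t * a" using assms by (intro mult_left_mono) auto
  moreover have "(1 - t) * m = m - t * m" by (simp add: algebra_simps)
  ultimately have tb: "(1 - t) * b \<le> (1 - t) * m" using assms(3) by linarith
  have "0 < 1 - t" using assms by simp
  then have "b \<le> m" using tb by (simp only: mult_le_cancel_left_pos)
  with 1 show ?thesis by simp
qed

lemma finite_chain_min: "finite F \<Longrightarrow> F \<noteq> {} \<Longrightarrow> chain\<^sub>\<subseteq> F \<Longrightarrow> \<exists>X\<in>F. \<forall>Y\<in>F. X \<subseteq> Y"
proof (induction F rule: finite_ne_induct)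
  case (singleton x) then show ?case by auto
next
  case (insert x F)
  have "chain\<^sub>\<subseteq> F" using insert.prems by (auto simp: chain_subset_def)
  then obtain X where X: "X \<in> F" "\<forall>Y\<in>F. X \<subseteq> Y" using insert.IH by blast
  have "x \<subseteq> X \<or> X \<subseteq> x" using insert.prems X(1) by (auto simp: chain_subset_def)
  then show ?case
  proof
    assume xX: "x \<subseteq> X"
    have "\<forall>Y\<in>insert x F. x \<subseteq> Y" using X(2) xX by (auto intro: order_trans)
    then show ?case by blast
  next
    assume "X \<subseteq> x"
    then have "\<forall>Y\<in>insert x F. X \<subseteq> Y" using X(2) by auto
    then show ?case using X(1) by blast
  qed
qed

context setting
begin

context
  fixes A assumes A: "A \<subseteq> CM"
begin

abbreviation "TS \<equiv> types af ar M n A"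
abbreviation "FF \<equiv> fmfuns af ar M n A"

lemma TS_add: "p \<in> TS \<Longrightarrow> f \<in> FF \<Longrightarrow> g \<in> FF \<Longrightarrow> p (\<lambda>xs. f xs + g xs) = p f + p g"
  by (simp add: types_def Let_def)
lemma TS_scale: "p \<in> TS \<Longrightarrow> f \<in> FF \<Longrightarrow> p (\<lambda>xs. c * f xs) = c * p f"
  by (simp add: types_def Let_def)
lemma TS_one: "p \<in> TS \<Longrightarrow> p (\<lambda>xs. 1) = 1"
  by (simp add: types_def Let_def)
lemma TS_pos: "p \<in> TS \<Longrightarrow> f \<in> FF \<Longrightarrow> \<forall>xs\<in>tuples CM n. 0 \<le> f xs \<Longrightarrow> 0 \<le> p f"
  by (simp add: types_def Let_def)
lemma TS_out: "p \<in> TS \<Longrightarrow> f \<notin> FF \<Longrightarrow> p f = 0"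
  by (simp add: types_def Let_def)

lemma FF_add: "f \<in> FF \<Longrightarrow> g \<in> FF \<Longrightarrow> (\<lambda>xs. f xs + g xs) \<in> FF"
proof -
  assume "f \<in> FF" "g \<in> FF"
  then obtain \<phi>1 \<rho>1 \<phi>2 \<rho>2 where r1: "isrep A \<phi>1 \<rho>1 f" and r2: "isrep A \<phi>2 \<rho>2 g" by (auto simp: F_iff)
  obtain \<psi>1 \<psi>2 \<rho> where p1: "isrep A \<psi>1 \<rho> f" and p2: "isrep A \<psi>2 \<rho> g"
    using merge[OF A r1 r2] by metis
  have p: "isrep A (Pls \<psi>1 \<psi>2) \<rho> (\<lambda>xs. f xs + g xs)" using p1 p2 by (auto simp: isrep_def)
  then show ?thesis by (auto simp: F_iff)
qed

lemma FF_scale: "f \<in> FF \<Longrightarrow> (\<lambda>xs. c * f xs) \<in> FF"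
proof -
  assume "f \<in> FF"
  then obtain \<phi> \<rho> where r: "isrep A \<phi> \<rho> f" by (auto simp: F_iff)
  have p: "isrep A (Scl c \<phi>) \<rho> (\<lambda>xs. c * f xs)" using r by (auto simp: isrep_def)
  then show ?thesis by (auto simp: F_iff)
qed

lemma FF_one: "(\<lambda>xs. 1) \<in> FF"
proof -
  have p: "isrep A One (\<lambda>_. m0) (\<lambda>xs. 1)" by (simp add: isrep_def)
  then show ?thesis by (auto simp: F_iff)
qed

lemma FF_const: "(\<lambda>xs. c) \<in> FF"
  using FF_scale[OF FF_one, of c] by simp

lemma TS_const: "p \<in> TS \<Longrightarrow> p (\<lambda>xs. c) = c"
  using TS_scale[OF _ FF_one, of p c] TS_one[of p] by simp

lemma TS_mono: assumes p: "p \<in> TS" and f: "f \<in> FF" and g: "g \<in> FF" and le: "\<forall>xs\<in>tuples CM n. f xs \<le> g xs"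
  shows "p f \<le> p g"
proof -
  have h: "(\<lambda>xs. g xs + -1 * f xs) \<in> FF" by (rule FF_add[OF g FF_scale[OF f]])
  have "0 \<le> p (\<lambda>xs. g xs + -1 * f xs)" using le by (intro TS_pos[OF p h]) auto
  also have "p (\<lambda>xs. g xs + -1 * f xs) = p g + p (\<lambda>xs. -1 * f xs)"
    using TS_add[OF p g FF_scale[OF f], of "-1"] by simp
  also have "p (\<lambda>xs. -1 * f xs) = - p f" using TS_scale[OF p f, of "-1"] by simp
  finally show ?thesis by simp
qed

lemma TS_bound: assumes p: "p \<in> TS" and f: "f \<in> FF" and b: "\<forall>xs\<in>tuples CM n. \<bar>f xs\<bar> \<le> c"
  shows "\<bar>p f\<bar> \<le> c"
proof -
  have "p f \<le> p (\<lambda>xs. c)" using b by (intro TS_mono[OF p f FF_const]) auto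
  moreover have "p (\<lambda>xs. - c) \<le> p f" using b by (intro TS_mono[OF p FF_const f]) (auto simp: abs_le_iff)
  ultimately show ?thesis using TS_const[OF p] by (auto simp: abs_le_iff)
qed

lemma FF_bounded: "f \<in> FF \<Longrightarrow> \<exists>c. \<forall>xs\<in>tuples CM n. \<bar>f xs\<bar> \<le> c"
proof -
  assume "f \<in> FF"
  then obtain \<phi> \<rho> where r: "isrep A \<phi> \<rho> f" by (auto simp: F_iff)
  have r': "isrep A \<phi> (fixr \<phi> \<rho>) f" and rr: "range (fixr \<phi> \<rho>) \<subseteq> CM" using rep_fix[OF A r] by auto
  have "\<forall>xs\<in>tuples CM n. \<bar>f xs\<bar> \<le> bnd \<phi>"
  proof
    fix xs assume "xs \<in> tuples CM n"
    then have "\<bar>eval M \<phi> (env xs (fixr \<phi> \<rho>))\<bar> \<le> bnd \<phi>"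
      using r' by (intro eval_bnd[OF sM] env_range[OF _ rr]) (auto simp: isrep_def)
    then show "\<bar>f xs\<bar> \<le> bnd \<phi>" using r' by (simp add: isrep_def)
  qed
  then show ?thesis by blast
qed

lemma TS_closed: "closed TS"
proof -
  have eq: "TS = {p. (\<forall>f. f \<notin> FF \<longrightarrow> p f = 0)
     \<and> (\<forall>f. f \<in> FF \<longrightarrow> (\<forall>g. g \<in> FF \<longrightarrow> p (\<lambda>xs. f xs + g xs) = p f + p g))
     \<and> (\<forall>f. f \<in> FF \<longrightarrow> (\<forall>c. p (\<lambda>xs. c * f xs) = c * p f))
     \<and> p (\<lambda>xs. 1) = 1
     \<and> (\<forall>f. f \<in> FF \<longrightarrow> (\<forall>xs\<in>tuples CM n. 0 \<le> f xs) \<longrightarrow> 0 \<le> p f)}"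
    by (auto simp: types_def Let_def)
  show ?thesis unfolding eq
    by (intro closed_Collect_conj closed_Collect_all closed_Collect_cimp closed_Collect_eq closed_Collect_le
        continuous_on_add continuous_on_mult_left continuous_on_const cont_ev)
qed

definition BB :: "('a list \<Rightarrow> real) \<Rightarrow> real" where
  "BB f = (if f \<in> FF then (SOME c. \<forall>xs\<in>tuples CM n. \<bar>f xs\<bar> \<le> c) else 0)"

lemma TS_compact: "compact TS"
proof -
  have box: "compact (PiE UNIV (\<lambda>f. {-BB f..BB f}))"
    using compactin_PiE[of "\<lambda>_. euclidean" UNIV "\<lambda>f. {-BB f..BB f}"]
    by (simp add: euclidean_product_topology)
  have "TS \<subseteq> PiE UNIV (\<lambda>f. {-BB f..BB f})"
  proof
    fix p assume p: "p \<in> TS"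
    have "p f \<in> {-BB f..BB f}" for f
    proof (cases "f \<in> FF")
      case True
      have "\<forall>xs\<in>tuples CM n. \<bar>f xs\<bar> \<le> (SOME c. \<forall>xs\<in>tuples CM n. \<bar>f xs\<bar> \<le> c)"
        by (rule someI_ex[OF FF_bounded[OF True]])
      then have "\<forall>xs\<in>tuples CM n. \<bar>f xs\<bar> \<le> BB f" using True by (simp add: BB_def)
      then have "\<bar>p f\<bar> \<le> BB f" by (rule TS_bound[OF p True])
      then show ?thesis by (auto simp: abs_le_iff)
    next
      case False then show ?thesis using TS_out[OF p] by (simp add: BB_def)
    qed
    then show "p \<in> PiE UNIV (\<lambda>f. {-BB f..BB f})" by (auto simp: PiE_iff)
  qed
  then have "TS = PiE UNIV (\<lambda>f. {-BB f..BB f}) \<inter> TS" by blast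
  then show ?thesis using compact_Int_closed[OF box TS_closed] by simp
qed

definition face :: "(('a list \<Rightarrow> real) \<Rightarrow> real) set \<Rightarrow> bool" where
  "face K \<longleftrightarrow> K \<subseteq> TS \<and> (\<forall>q1\<in>TS. \<forall>q2\<in>TS. \<forall>t::real. 0 < t \<and> t < 1 \<and> (\<lambda>f. t * q1 f + (1 - t) * q2 f) \<in> K
        \<longrightarrow> q1 \<in> K \<and> q2 \<in> K)"

lemma face_compact: "face K \<Longrightarrow> closed K \<Longrightarrow> compact K"
  using compact_Int_closed[OF TS_compact, of K] by (auto simp: face_def Int_absorb1)

lemma argmin_face:
  assumes K: "face K" "closed K" "K \<noteq> {}"
  shows "\<exists>K'. K' \<subseteq> K \<and> K' \<noteq> {} \<and> closed K' \<and> face K' \<and> (\<forall>p\<in>K'. \<forall>q\<in>K. p g \<le> q g)"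
proof -
  have "continuous_on K (\<lambda>p. p g)" by (rule continuous_on_subset[OF cont_ev]) simp
  then obtain p0 where p0: "p0 \<in> K" "\<forall>q\<in>K. p0 g \<le> q g"
    using continuous_attains_inf[OF face_compact[OF K(1,2)] K(3)] by blast
  define K' where "K' = K \<inter> {p. p g \<le> p0 g}"
  have "closed K'" unfolding K'_def
    by (intro closed_Int K(2) closed_Collect_le cont_ev continuous_on_const)
  moreover have "K' \<noteq> {}" using p0 by (auto simp: K'_def)
  moreover have "face K'"
    unfolding face_def
  proof (intro conjI ballI allI impI)
    show "K' \<subseteq> TS" using K(1) by (auto simp: K'_def face_def)
    fix q1 q2 t assume q: "q1 \<in> TS" "q2 \<in> TS" and h: "0 < t \<and> t < 1 \<and> (\<lambda>f. t * q1 f + (1 - t) * q2 f) \<in> K'"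
    then have qK: "q1 \<in> K" "q2 \<in> K" using K(1) by (auto simp: face_def K'_def)
    have "t * q1 g + (1 - t) * q2 g \<le> p0 g" using h by (auto simp: K'_def)
    then have "q1 g \<le> p0 g \<and> q2 g \<le> p0 g" using h p0(2) qK by (intro comb_le) auto
    then show "q1 \<in> K'" "q2 \<in> K'" using qK by (auto simp: K'_def)
  qed
  moreover have "\<forall>p\<in>K'. \<forall>q\<in>K. p g \<le> q g"
  proof (intro ballI)
    fix p q assume "p \<in> K'" "q \<in> K"
    then have "p g \<le> p0 g" "p0 g \<le> q g" using p0 by (auto simp: K'_def)
    then show "p g \<le> q g" by linarith
  qed
  moreover have "K' \<subseteq> K" by (simp add: K'_def)
  ultimately show ?thesis by blast
qed

lemma exists_extreme:
  assumes K: "face K" "closed K" "K \<noteq> {}"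
  shows "\<exists>p\<in>K. extreme_in p TS"
proof -
  define Fam where "Fam = {K'. K' \<subseteq> K \<and> K' \<noteq> {} \<and> closed K' \<and> face K'}"
  define G where "G = uminus ` Fam"
  have KF: "K \<in> Fam" using K by (simp add: Fam_def)
  have "\<forall>C\<in>chains G. \<exists>U\<in>G. \<forall>X\<in>C. X \<subseteq> U"
  proof
    fix C assume C: "C \<in> chains G"
    show "\<exists>U\<in>G. \<forall>X\<in>C. X \<subseteq> U"
    proof (cases "C = {}")
      case True then show ?thesis using KF by (auto simp: G_def)
    next
      case False
      define C' where "C' = uminus ` C"
      have C'F: "C' \<subseteq> Fam" using C by (auto simp: C'_def G_def chains_def)
      have C'ch: "chain\<^sub>\<subseteq> C'" using C by (auto simp: C'_def chains_def chain_subset_def)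
      have C'ne: "C' \<noteq> {}" using False by (simp add: C'_def)
      define I where "I = \<Inter>C'"
      have IK: "I \<subseteq> K" using C'F C'ne by (auto simp: I_def Fam_def)
      have Ine: "K \<inter> \<Inter>C' \<noteq> {}"
      proof (rule compact_imp_fip[OF face_compact[OF K(1,2)]])
        show "\<And>T. T \<in> C' \<Longrightarrow> closed T" using C'F by (auto simp: Fam_def)
        fix F' assume F': "finite F'" "F' \<subseteq> C'"
        show "K \<inter> \<Inter>F' \<noteq> {}"
        proof (cases "F' = {}")
          case True then show ?thesis using K by simp
        next
          case False
          have "chain\<^sub>\<subseteq> F'" using C'ch F' by (auto simp: chain_subset_def)
          then obtain X where X: "X \<in> F'" "\<forall>Y\<in>F'. X \<subseteq> Y" using finite_chain_min[OF F'(1) False] by blast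
          have "X \<in> Fam" using X F' C'F by auto
          then have "X \<noteq> {}" "X \<subseteq> K" by (auto simp: Fam_def)
          then show ?thesis using X by blast
        qed
      qed
      have "I \<in> Fam"
        unfolding Fam_def mem_Collect_eq
      proof (intro conjI)
        show "I \<subseteq> K" by (rule IK)
        show "I \<noteq> {}" using Ine IK by (auto simp: I_def)
        show "closed I" unfolding I_def using C'F by (intro closed_Inter) (auto simp: Fam_def)
        show "face I" unfolding face_def
        proof (intro conjI ballI allI impI)
          show "I \<subseteq> TS" using IK K(1) by (auto simp: face_def)
          fix q1 q2 t assume q: "q1 \<in> TS" "q2 \<in> TS" and h: "0 < t \<and> t < 1 \<and> (\<lambda>f. t * q1 f + (1 - t) * q2 f) \<in> I"
          have "q1 \<in> Y \<and> q2 \<in> Y" if Y: "Y \<in> C'" for Y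
          proof -
            have "face Y" using Y C'F by (auto simp: Fam_def)
            moreover have "(\<lambda>f. t * q1 f + (1 - t) * q2 f) \<in> Y" using h Y by (auto simp: I_def)
            ultimately show ?thesis using q h unfolding face_def by blast
          qed
          then show "q1 \<in> I" "q2 \<in> I" by (auto simp: I_def)
        qed
      qed
      moreover have "\<forall>X\<in>C. X \<subseteq> - I"
      proof
        fix X assume "X \<in> C"
        then have "- X \<in> C'" by (simp add: C'_def)
        then have "I \<subseteq> - X" by (auto simp: I_def)
        then show "X \<subseteq> - I" by auto
      qed
      ultimately show ?thesis by (auto simp: G_def)
    qed
  qed
  from Zorn_Lemma2[OF this] obtain Mx where Mx: "Mx \<in> G" "\<forall>X\<in>G. Mx \<subseteq> X \<longrightarrow> X = Mx" by blast
  then obtain F0 where F0: "F0 \<in> Fam" "Mx = - F0" by (auto simp: G_def)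
  have minl: "K' = F0" if "K' \<in> Fam" "K' \<subseteq> F0" for K'
  proof -
    have "- K' \<in> G" using that by (simp add: G_def)
    moreover have "Mx \<subseteq> - K'" using that F0 by auto
    ultimately have "- K' = - F0" using Mx F0 by auto
    then show ?thesis by simp
  qed
  have F0p: "F0 \<subseteq> K" "F0 \<noteq> {}" "closed F0" "face F0" using F0 by (auto simp: Fam_def)
  obtain p where p: "p \<in> F0" using F0p by auto
  have single: "F0 = {p}"
  proof (rule ccontr)
    assume "F0 \<noteq> {p}"
    then obtain q where q: "q \<in> F0" "q \<noteq> p" using p by auto
    then obtain g where g: "q g \<noteq> p g" by (auto simp: fun_eq_iff)
    obtain K' where K': "K' \<subseteq> F0" "K' \<noteq> {}" "closed K'" "face K'" "\<forall>a\<in>K'. \<forall>b\<in>F0. a g \<le> b g"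
      using argmin_face[OF F0p(4,3,2), of g] by blast
    have "K' \<in> Fam" using K' F0p by (auto simp: Fam_def)
    then have "K' = F0" using minl K'(1) by blast
    then have "q g \<le> p g" "p g \<le> q g" using K'(5) p q by auto
    then show False using g by simp
  qed
  have "extreme_in p TS"
    unfolding extreme_in_def
  proof (intro conjI ballI allI impI)
    show "p \<in> TS" using F0p(4) p by (auto simp: face_def)
    fix q1 q2 t assume q: "q1 \<in> TS" "q2 \<in> TS" and h: "0 < t \<and> t < 1 \<and> p = (\<lambda>f. t * q1 f + (1 - t) * q2 f)"
    then have "q1 \<in> F0 \<and> q2 \<in> F0" using F0p(4) p unfolding face_def by (metis (no_types, lifting))
    then show "q1 = q2" using single by auto
  qed
  then show ?thesis using p F0p(1) by blast
qed

end
end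

context setting
begin

abbreviation "dN \<equiv> tsetdist N n D"

lemma D_sub: "D \<subseteq> tuples CN n" using dD by (simp add: def_set_def closed_tuples_def)

lemma dN_inf: "D \<noteq> {} \<Longrightarrow> dN xs = (INF ys\<in>D. tdist N xs ys)"
  by (simp add: tsetdist_def)

lemma dN_bdd: "xs \<in> tuples CN n \<Longrightarrow> bdd_below ((\<lambda>ys. tdist N xs ys) ` D)"
  using D_sub by (intro bdd_belowI[where m=0]) (auto intro: tdist_nonneg[OF sN])

lemma dN_nonneg: "D \<noteq> {} \<Longrightarrow> xs \<in> tuples CN n \<Longrightarrow> 0 \<le> dN xs"
  unfolding dN_inf using D_sub by (intro cINF_greatest) (auto intro: tdist_nonneg[OF sN])

lemma dN_le: "xs \<in> tuples CN n \<Longrightarrow> ys \<in> D \<Longrightarrow> dN xs \<le> tdist N xs ys"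
  using dN_inf[of xs] cINF_lower[OF dN_bdd] by fastforce

lemma dN_zero: "ys \<in> D \<Longrightarrow> dN ys = 0"
proof -
  assume y: "ys \<in> D"
  then have yt: "ys \<in> tuples CN n" using D_sub by auto
  show ?thesis using dN_le[OF yt y] tdist_self[OF sN yt] dN_nonneg[OF _ yt] y by fastforce
qed

lemma dN_zero_in: assumes Dne: "D \<noteq> {}" and xs: "xs \<in> tuples CN n" and z: "dN xs \<le> 0" shows "xs \<in> D"
proof -
  have "\<forall>e>0. \<exists>ys\<in>D. tdist N xs ys < e"
  proof (intro allI impI)
    fix e :: real assume "0 < e"
    then have "(INF ys\<in>D. tdist N xs ys) < e" using z dN_inf[OF Dne] by simp
    then show "\<exists>ys\<in>D. tdist N xs ys < e" using cINF_less_iff[OF Dne dN_bdd[OF xs]] by blast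
  qed
  moreover have "closed_tuples N n D" using dD by (simp add: def_set_def)
  ultimately show ?thesis using xs unfolding closed_tuples_def by blast
qed

lemma approx_seq: "\<exists>\<psi>. (\<forall>k. wf_fm af ar (\<psi> k) \<and> fv (\<psi> k) \<subseteq> {..<n}) \<and>
   (\<forall>k. \<forall>xs\<in>tuples CN n. \<bar>eval N (\<psi> k) (\<lambda>i. xs ! i) - dN xs\<bar> \<le> inverse (real (Suc k)))"
proof -
  obtain \<phi> :: "nat \<Rightarrow> ('f,'r) afm" where \<phi>: "\<forall>k. wf_fm af ar (\<phi> k) \<and> fv (\<phi> k) \<subseteq> {..<n}"
    and c: "\<forall>e>0. \<exists>K. \<forall>k\<ge>K. \<forall>xs\<in>tuples CN n. \<bar>eval N (\<phi> k) (\<lambda>i. xs ! i) - dN xs\<bar> \<le> e"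
    using dD unfolding def_set_def def_pred_def by blast
  have "\<forall>k. \<exists>K. \<forall>xs\<in>tuples CN n. \<bar>eval N (\<phi> K) (\<lambda>i. xs ! i) - dN xs\<bar> \<le> inverse (real (Suc k))"
  proof
    fix k
    have "(0::real) < inverse (real (Suc k))" by simp
    from c[rule_format, OF this] obtain K where
      K: "\<forall>k'\<ge>K. \<forall>xs\<in>tuples CN n. \<bar>eval N (\<phi> k') (\<lambda>i. xs ! i) - dN xs\<bar> \<le> inverse (real (Suc k))"
      by blast
    have "\<forall>xs\<in>tuples CN n. \<bar>eval N (\<phi> K) (\<lambda>i. xs ! i) - dN xs\<bar> \<le> inverse (real (Suc k))"
      using K by blast
    then show "\<exists>K. \<forall>xs\<in>tuples CN n. \<bar>eval N (\<phi> K) (\<lambda>i. xs ! i) - dN xs\<bar> \<le> inverse (real (Suc k))" by blast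
  qed
  then obtain Kf where "\<forall>k. \<forall>xs\<in>tuples CN n. \<bar>eval N (\<phi> (Kf k)) (\<lambda>i. xs ! i) - dN xs\<bar> \<le> inverse (real (Suc k))"
    by metis
  then show ?thesis using \<phi> by (intro exI[of _ "\<lambda>k. \<phi> (Kf k)"]) auto
qed

lemma face_step:
  fixes s :: real and a b e :: "nat \<Rightarrow> real"
  assumes s: "0 < s" "s < 1"
    and comb: "\<forall>j. s * a j + (1 - s) * b j \<le> e j"
    and bl: "\<forall>j. - e j \<le> b j"
    and al: "\<forall>k j. a k \<le> a j + e k + e j"
    and ee: "\<forall>d>0. \<exists>j. e j < d"
  shows "a k \<le> e k"
proof (rule ccontr)
  assume "\<not> a k \<le> e k"
  then have "0 < s * (a k - e k) / 2" using s by simp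
  then obtain j where j: "e j < s * (a k - e k) / 2" using ee by blast
  have 1: "(1 - s) * (- e j) \<le> (1 - s) * b j" using s bl by (intro mult_left_mono) auto
  have 2: "s * a k \<le> s * (a j + e k + e j)" using s al by (intro mult_left_mono) auto
  have 3: "s * (a j + e k + e j) = s * a j + s * e k + s * e j" by (simp add: algebra_simps)
  have 4: "(1 - s) * (- e j) = - e j + s * e j" by (simp add: algebra_simps)
  have 5: "s * (a k - e k) = s * a k - s * e k" by (simp add: algebra_simps)
  have "s * a j + (1 - s) * b j \<le> e j" using comb by blast
  then show False using 1 2 3 4 5 j by linarith
qed

lemma core:
  assumes x: "x \<in> tuples CM n" and Dne: "D \<noteq> {}"
  shows "\<exists>y\<in>D \<inter> tuples CM n. tdist M x y \<le> dN x"
proof -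
  define A where "A = set x"
  have A: "A \<subseteq> CM" using x by (auto simp: A_def tuples_def)
  have lx: "length x = n" using x by (simp add: tuples_def)
  obtain \<psi> where \<psi>: "\<forall>k. wf_fm af ar (\<psi> k) \<and> fv (\<psi> k) \<subseteq> {..<n}"
    and \<psi>c: "\<forall>k. \<forall>xs\<in>tuples CN n. \<bar>eval N (\<psi> k) (\<lambda>i. xs ! i) - dN xs\<bar> \<le> inverse (real (Suc k))"
    using approx_seq by blast
  define e :: "nat \<Rightarrow> real" where "e k = inverse (real (Suc k))" for k
  have epos: "0 < e k" for k by (simp add: e_def)
  have ee: "\<forall>d>0. \<exists>j. e j < d" using reals_Archimedean by (auto simp: e_def)
  define fk where "fk k = (\<lambda>xs. eval M (\<psi> k) (env xs (\<lambda>_. m0)))" for k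
  have fkr: "isrep A (\<psi> k) (\<lambda>_. m0) (fk k)" for k
    unfolding isrep_def fk_def
  proof (intro conjI ballI impI)
    show "wf_fm af ar (\<psi> k)" using \<psi> by blast
    fix i assume "i \<in> fv (\<psi> k)" "n \<le> i"
    moreover have "fv (\<psi> k) \<subseteq> {..<n}" using \<psi> by blast
    ultimately show "m0 \<in> A" by auto
  qed simp
  have fkF: "fk k \<in> fmfuns af ar M n A" for k using fkr by (auto simp: F_iff)
  have envN: "eval S (\<psi> k) (env xs (\<lambda>_. m0)) = eval S (\<psi> k) (\<lambda>i. xs ! i)" for S :: "('a,'f,'r) struc" and k xs
    using \<psi> by (intro eval_fv) (auto simp: env_def)
  have fkM: "fk k xs = eval N (\<psi> k) (\<lambda>i. xs ! i)" if xs: "xs \<in> tuples CM n" for k xs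
  proof -
    have "range (env xs (\<lambda>_. m0)) \<subseteq> CM" using xs m0 by (intro env_range) auto
    then have "fk k xs = eval N (\<psi> k) (env xs (\<lambda>_. m0))" unfolding fk_def using \<psi> by (intro ee_eval) auto
    then show ?thesis by (simp add: envN)
  qed
  have fk_close: "\<bar>fk k xs - dN xs\<bar> \<le> e k" if xs: "xs \<in> tuples CM n" for k xs
    using \<psi>c tuples_sub[OF xs] fkM[OF xs] by (simp add: e_def)
  define \<rho>x where "\<rho>x = (\<lambda>j. if n \<le> j \<and> j < n + n then x ! (j - n) else m0)"
  define g where "g = (\<lambda>ys. eval M (dsum n n) (env ys \<rho>x))"
  have gr: "isrep A (dsum n n) \<rho>x g"
    unfolding isrep_def g_def
  proof (intro conjI ballI impI)
    show "wf_fm af ar (dsum n n)" by (rule wf_dsum)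
    fix i assume "i \<in> fv (dsum n n)" "n \<le> i"
    then have "i < n + n" using fv_dsum[of n n] by auto
    then show "\<rho>x i \<in> A" using \<open>n \<le> i\<close> lx by (auto simp: \<rho>x_def A_def)
  qed simp
  have evd: "eval S (dsum n n) (env ys \<rho>x) = (\<Sum>i<n. sc_d S (x ! i) (ys ! i))" for S :: "('a,'f,'r) struc" and ys
    unfolding eval_dsum by (intro sum.cong) (auto simp: env_def \<rho>x_def)
  have gM: "g ys = tdist M x ys" for ys by (simp add: g_def evd tdist_def lx)
  define TS where "TS = types af ar M n A"
  define K1 where "K1 = {p \<in> TS. \<forall>k. p (fk k) \<le> e k}"
  have low: "- e k \<le> p (fk k)" if p: "p \<in> TS" for p k
  proof -
    have "p (\<lambda>xs. - e k) \<le> p (fk k)"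
    proof (rule TS_mono[OF A p[unfolded TS_def] FF_const[OF A] fkF])
      show "\<forall>xs\<in>tuples CM n. - e k \<le> fk k xs"
      proof
        fix xs assume xs: "xs \<in> tuples CM n"
        show "- e k \<le> fk k xs" using fk_close[OF xs, of k] dN_nonneg[OF Dne tuples_sub[OF xs]] by (simp add: abs_le_iff)
      qed
    qed
    then show ?thesis using TS_const[OF A p[unfolded TS_def]] by simp
  qed
  have diff: "p (fk k) \<le> p (fk j) + e k + e j" if p: "p \<in> TS" for p k j
  proof -
    have h: "(\<lambda>xs. fk j xs + (e k + e j)) \<in> fmfuns af ar M n A" by (rule FF_add[OF A fkF FF_const[OF A]])
    have "p (fk k) \<le> p (\<lambda>xs. fk j xs + (e k + e j))"
    proof (rule TS_mono[OF A p[unfolded TS_def] fkF h])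
      show "\<forall>xs\<in>tuples CM n. fk k xs \<le> fk j xs + (e k + e j)"
      proof
        fix xs assume xs: "xs \<in> tuples CM n"
        show "fk k xs \<le> fk j xs + (e k + e j)" using fk_close[OF xs, of k] fk_close[OF xs, of j] by (simp add: abs_le_iff)
      qed
    qed
    also have "p (\<lambda>xs. fk j xs + (e k + e j)) = p (fk j) + (e k + e j)"
      using TS_add[OF A p[unfolded TS_def] fkF FF_const[OF A]] TS_const[OF A p[unfolded TS_def]] by simp
    finally show ?thesis by simp
  qed
  have K1_face: "face A K1"
    unfolding local.face_def[OF A]
  proof (intro conjI ballI allI impI)
    show "K1 \<subseteq> types af ar M n A" by (auto simp: K1_def TS_def)
    fix q1 q2 and t :: real assume q: "q1 \<in> types af ar M n A" "q2 \<in> types af ar M n A"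
      and h: "0 < t \<and> t < 1 \<and> (\<lambda>f. t * q1 f + (1 - t) * q2 f) \<in> K1"
    have c1: "\<forall>j. t * q1 (fk j) + (1 - t) * q2 (fk j) \<le> e j" using h by (auto simp: K1_def)
    have c2: "\<forall>j. (1 - t) * q2 (fk j) + (1 - (1 - t)) * q1 (fk j) \<le> e j" using c1 by (simp add: add.commute)
    have "q1 (fk k) \<le> e k" for k
      using face_step[of t "\<lambda>j. q1 (fk j)" "\<lambda>j. q2 (fk j)" e] h c1 low[of q2] diff[of q1] ee q
      by (auto simp: TS_def)
    then show "q1 \<in> K1" using q by (auto simp: K1_def TS_def)
    have "q2 (fk k) \<le> e k" for k
      using face_step[of "1 - t" "\<lambda>j. q2 (fk j)" "\<lambda>j. q1 (fk j)" e] h c2 low[of q1] diff[of q2] ee q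
      by (auto simp: TS_def)
    then show "q2 \<in> K1" using q by (auto simp: K1_def TS_def)
  qed
  have K1_closed: "closed K1"
  proof -
    have "K1 = TS \<inter> {p. \<forall>k. p (fk k) \<le> e k}" by (auto simp: K1_def)
    then show ?thesis unfolding TS_def
      by (simp only:) (intro closed_Int TS_closed[OF A] closed_Collect_all closed_Collect_le cont_ev continuous_on_const)
  qed
  have tpK1: "tp A z \<in> K1" and tpg: "tp A z g = tdist N x z" if z: "z \<in> D" for z
  proof -
    have zt: "z \<in> tuples CN n" using z D_sub by auto
    have "tp A z (fk k) \<le> e k" for k
    proof -
      have "tp A z (fk k) = eval N (\<psi> k) (\<lambda>i. z ! i)" using tp_rep[OF A fkr zt] envN by simp
      then show ?thesis using \<psi>c zt dN_zero[OF z] by (force simp: e_def abs_le_iff)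
    qed
    then show "tp A z \<in> K1" using tp_types[OF A zt] by (auto simp: K1_def TS_def)
    show "tp A z g = tdist N x z" using tp_rep[OF A gr zt] by (simp add: evd tdist_def lx)
  qed
  obtain z0 where "z0 \<in> D" using Dne by auto
  then have K1ne: "K1 \<noteq> {}" using tpK1 by blast
  obtain K2 where K2: "K2 \<subseteq> K1" "K2 \<noteq> {}" "closed K2" "face A K2" "\<forall>p\<in>K2. \<forall>q\<in>K1. p g \<le> q g"
    using argmin_face[OF A K1_face K1_closed K1ne, of g] by blast
  obtain p where p: "p \<in> K2" "extreme_in p (types af ar M n A)"
    using exists_extreme[OF A K2(4,3,2)] by blast
  have "finite A" by (simp add: A_def)
  then have "\<exists>xs\<in>tuples CM n. realizes af ar M n A xs p"
    by (intro es[unfolded ext_sat_def, rule_format] conjI A p(2))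
  then obtain y where y: "y \<in> tuples CM n" and ry: "realizes af ar M n A y p" by blast
  have py: "p f = f y" if "f \<in> fmfuns af ar M n A" for f using ry that by (simp add: realizes_def)
  have pK1: "p \<in> K1" using p K2 by auto
  have "dN y \<le> 2 * e k" for k
  proof -
    have "fk k y \<le> e k" using pK1 py[OF fkF] by (simp add: K1_def)
    then show ?thesis using fk_close[OF y, of k] by (simp add: abs_le_iff)
  qed
  then have "dN y \<le> 0"
  proof -
    assume h: "\<And>k. dN y \<le> 2 * e k"
    show "dN y \<le> 0"
    proof (rule ccontr)
      assume "\<not> dN y \<le> 0"
      then obtain j where "e j < dN y / 2" using ee by (meson half_gt_zero not_le)
      then show False using h[of j] by simp
    qed
  qed
  then have yD: "y \<in> D" by (rule dN_zero_in[OF Dne tuples_sub[OF y]])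
  have "tdist M x y \<le> dN x + d" if d: "0 < d" for d
  proof -
    have "dN x < dN x + d" using d by simp
    then have "(INF ys\<in>D. tdist N x ys) < dN x + d" using dN_inf[OF Dne] by simp
    then obtain z where z: "z \<in> D" "tdist N x z < dN x + d"
      using cINF_less_iff[OF Dne dN_bdd[OF tuples_sub[OF x]]] by blast
    have gF: "g \<in> fmfuns af ar M n A" using gr by (auto simp: F_iff)
    have "tdist M x y = p g" using py[OF gF] gM[of y] by (simp only:)
    also have "\<dots> \<le> tp A z g" using K2(5) p(1) tpK1[OF z(1)] by blast
    also have "\<dots> = tdist N x z" by (rule tpg[OF z(1)])
    finally show ?thesis using z by simp
  qed
  then have "tdist M x y \<le> dN x" by (rule field_le_epsilon)
  then show ?thesis using yD y by blast
qed

end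

lemma teval_expand: "teval (expand S P) \<rho> t = teval S \<rho> t"
  by (induction t) (auto simp: expand_def intro!: arg_cong[where f="sc_fn S _"])

lemma expand_simps: "sc_carrier (expand S P) = sc_carrier S" "sc_d (expand S P) = sc_d S"
  "sc_rel (expand S P) None = P" "sc_rel (expand S P) (Some r) = sc_rel S r"
  by (auto simp: expand_def)

lemma relnone:
  fixes \<phi> :: "('f,'r) afm"
  assumes ts: "\<forall>t\<in>set ts. wf_trm af t" and lt: "length ts = n" and w: "wf_fm af ar \<phi>" and fvp: "fv \<phi> \<subseteq> {..<n}"
  shows "\<exists>ch. wf_fm af ar ch \<and> (\<forall>(S::('a,'f,'r) struc) \<rho>. eval S ch \<rho> = eval S \<phi> (\<lambda>i. teval S \<rho> (ts ! i)))"
proof -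
  define B where "B = Suc (Max (insert 0 (\<Union>t\<in>set ts. fv_trm t)))"
  have fin: "finite (insert 0 (\<Union>t\<in>set ts. fv_trm t))" by (simp add: finite_fv_trm)
  have Bt: "v < B" if "t \<in> set ts" "v \<in> fv_trm t" for t v
  proof -
    have "v \<in> insert 0 (\<Union>t\<in>set ts. fv_trm t)" using that by blast
    then have "v \<le> Max (insert 0 (\<Union>t\<in>set ts. fv_trm t))" by (rule Max_ge[OF fin])
    then show ?thesis unfolding B_def by simp
  qed
  define \<sigma> :: "nat \<Rightarrow> nat" where "\<sigma> = (\<lambda>i. i + B)"
  have inj: "inj \<sigma>" by (simp add: \<sigma>_def inj_def)
  define s where "s = (\<lambda>j. if B \<le> j \<and> j < B + n then ts ! (j - B) else Var j)"
  have ws: "\<forall>j. wf_trm af (s j)" using ts lt by (auto simp: s_def)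
  have cond: "\<forall>x\<in>bv (ren \<sigma> \<phi>). \<forall>j. j \<noteq> x \<longrightarrow> x \<notin> fv_trm (s j)"
  proof (intro ballI allI impI)
    fix x j assume x: "x \<in> bv (ren \<sigma> \<phi>)" and jx: "j \<noteq> x"
    then have xB: "B \<le> x" by (auto simp: bv_ren \<sigma>_def)
    show "x \<notin> fv_trm (s j)"
    proof (cases "B \<le> j \<and> j < B + n")
      case True
      then have "ts ! (j - B) \<in> set ts" using lt by auto
      then show ?thesis using True Bt xB by (fastforce simp: s_def)
    next
      case False then have "s j = Var j" by (auto simp: s_def)
      then show ?thesis using jx by simp
    qed
  qed
  have "wf_fm af ar (sb s (ren \<sigma> \<phi>))" using w by (simp add: wf_sb[OF ws] wf_ren)
  moreover have "eval S (sb s (ren \<sigma> \<phi>)) \<rho> = eval S \<phi> (\<lambda>i. teval S \<rho> (ts ! i))" for S :: "('a,'f,'r) struc" and \<rho>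
  proof -
    have "eval S (sb s (ren \<sigma> \<phi>)) \<rho> = eval S (ren \<sigma> \<phi>) (\<lambda>j. teval S \<rho> (s j))" by (rule eval_sb[OF cond])
    also have "\<dots> = eval S \<phi> ((\<lambda>j. teval S \<rho> (s j)) \<circ> \<sigma>)" by (rule eval_ren[OF inj])
    also have "\<dots> = eval S \<phi> (\<lambda>i. teval S \<rho> (ts ! i))"
      using fvp by (intro eval_fv) (auto simp: s_def \<sigma>_def)
    finally show ?thesis .
  qed
  ultimately show ?thesis by blast
qed

context setting
begin

abbreviation "CC \<equiv> D \<inter> tuples CM n"
abbreviation "dM \<equiv> tsetdist M n CC"

lemma m0_tuple: "replicate n m0 \<in> tuples CM n"
  using m0 by (auto simp: tuples_def)

lemma sup_eq: "(SUP p\<in>tuples CN n \<times> tuples CN n. tdist N (fst p) (snd p)) =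
   (SUP p\<in>tuples CM n \<times> tuples CM n. tdist M (fst p) (snd p))" (is "?sN = ?sM")
proof -
  have neM: "tuples CM n \<times> tuples CM n \<noteq> {}" using m0_tuple by auto
  have neN: "tuples CN n \<times> tuples CN n \<noteq> {}" using m0_tuple tuples_sub by blast
  have bM: "bdd_above ((\<lambda>p. tdist M (fst p) (snd p)) ` (tuples CM n \<times> tuples CM n))"
    by (intro bdd_aboveI[where M="real n"]) (auto intro: tdist_le[OF sM])
  have bN: "bdd_above ((\<lambda>p. tdist N (fst p) (snd p)) ` (tuples CN n \<times> tuples CN n))"
    by (intro bdd_aboveI[where M="real n"]) (auto intro: tdist_le[OF sN])
  have 1: "?sM \<le> ?sN"
  proof (rule cSUP_least[OF neM])
    fix p assume p: "p \<in> tuples CM n \<times> tuples CM n"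
    then have "tdist M (fst p) (snd p) = tdist N (fst p) (snd p)" by (auto simp: tdist_agree)
    also have "\<dots> \<le> ?sN" using p tuples_sub by (intro cSUP_upper[OF _ bN]) auto
    finally show "tdist M (fst p) (snd p) \<le> ?sN" .
  qed
  have 2: "?sN \<le> ?sM"
  proof (rule cSUP_least[OF neN])
    fix p assume p: "p \<in> tuples CN n \<times> tuples CN n"
    obtain u v where uv: "p = (u, v)" by (cases p)
    have u: "u \<in> tuples CN n" and v: "v \<in> tuples CN n" using p uv by auto
    let ?ch = "Pls (Scl ?sM One) (Scl (-1) (dsum n n))"
    have w: "wf_fm af ar ?ch" by (simp add: wf_dsum)
    have r0: "range (\<lambda>_::nat. m0) \<subseteq> CM" using m0 by auto
    have hyp: "\<forall>\<rho>'. range \<rho>' \<subseteq> CM \<and> (\<forall>i\<ge>n + n. \<rho>' i = m0) \<longrightarrow> 0 \<le> eval M ?ch \<rho>'"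
    proof (intro allI impI)
      fix \<rho>' assume a: "range \<rho>' \<subseteq> CM \<and> (\<forall>i\<ge>n + n. \<rho>' i = m0)"
      define u' where "u' = map (\<lambda>i. \<rho>' (n + i)) [0..<n]"
      define v' where "v' = map \<rho>' [0..<n]"
      have tu: "u' \<in> tuples CM n" "v' \<in> tuples CM n" using a by (auto simp: u'_def v'_def tuples_def)
      have "eval M (dsum n n) \<rho>' = tdist M u' v'"
        by (simp add: eval_dsum tdist_def u'_def v'_def)
      also have "\<dots> \<le> ?sM" using tu by (intro cSUP_upper[OF _ bM, of "(u', v')", simplified]) auto
      finally show "0 \<le> eval M ?ch \<rho>'" by simp
    qed
    define \<rho>' where "\<rho>' = (\<lambda>i. if i < n then v ! i else if i < n + n then u ! (i - n) else m0)"
    have "range \<rho>' \<subseteq> CN" using u v m0 sub by (auto simp: \<rho>'_def tuples_def)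
    moreover have "\<forall>i\<ge>n + n. \<rho>' i = m0" by (simp add: \<rho>'_def)
    ultimately have "0 \<le> eval N ?ch \<rho>'" using transfer[OF w r0 hyp] by blast
    moreover have "eval N (dsum n n) \<rho>' = tdist N u v"
      using u by (simp add: eval_dsum tdist_def \<rho>'_def tuples_def)
    ultimately show "tdist N (fst p) (snd p) \<le> ?sM" using uv by simp
  qed
  show ?thesis using 1 2 by simp
qed

lemma CC_ne: "D \<noteq> {} \<Longrightarrow> CC \<noteq> {}"
  using core[OF m0_tuple] by blast

lemma dist_eq: assumes xs: "xs \<in> tuples CM n" shows "dN xs = dM xs"
proof (cases "D = {}")
  case True
  then show ?thesis using sup_eq by (simp add: tsetdist_def)
next
  case False
  have ne: "CC \<noteq> {}" by (rule CC_ne[OF False])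
  have dm: "dM xs = (INF y\<in>CC. tdist M xs y)" using ne by (simp add: tsetdist_def)
  have bb: "bdd_below ((\<lambda>y. tdist M xs y) ` CC)"
    using xs by (intro bdd_belowI[where m=0]) (auto intro: tdist_nonneg[OF sM])
  have 1: "dN xs \<le> dM xs" unfolding dm
  proof (rule cINF_greatest[OF ne])
    fix y assume y: "y \<in> CC"
    have "dN xs \<le> tdist N xs y" using y by (intro dN_le tuples_sub[OF xs]) auto
    then show "dN xs \<le> tdist M xs y" using y xs tdist_agree by auto
  qed
  obtain y where y: "y \<in> CC" "tdist M xs y \<le> dN xs" using core[OF xs False] by blast
  have "dM xs \<le> tdist M xs y" unfolding dm by (rule cINF_lower[OF bb y(1)])
  then show ?thesis using 1 y by simp
qed

lemma part1: "def_set af ar M n CC"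
  unfolding def_set_def
proof
  show "closed_tuples M n CC"
    unfolding closed_tuples_def
  proof (intro conjI ballI impI)
    show "CC \<subseteq> tuples CM n" by blast
    fix xs assume xs: "xs \<in> tuples CM n" and h: "\<forall>e>0. \<exists>ys\<in>CC. tdist M xs ys < e"
    have "\<forall>e>0. \<exists>ys\<in>D. tdist N xs ys < e"
    proof (intro allI impI)
      fix e :: real assume "0 < e"
      then obtain ys where ys: "ys \<in> CC" "tdist M xs ys < e" using h by blast
      then have "tdist N xs ys < e" using tdist_agree[OF xs, of ys] by simp
      then show "\<exists>ys\<in>D. tdist N xs ys < e" using ys by blast
    qed
    moreover have "closed_tuples N n D" using dD by (simp add: def_set_def)
    ultimately have "xs \<in> D" using tuples_sub[OF xs] unfolding closed_tuples_def by blast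
    then show "xs \<in> CC" using xs by blast
  qed
  obtain \<phi> :: "nat \<Rightarrow> ('f,'r) afm" where \<phi>: "\<forall>k. wf_fm af ar (\<phi> k) \<and> fv (\<phi> k) \<subseteq> {..<n}"
    and c: "\<forall>e>0. \<exists>K. \<forall>k\<ge>K. \<forall>xs\<in>tuples CN n. \<bar>eval N (\<phi> k) (\<lambda>i. xs ! i) - dN xs\<bar> \<le> e"
    using dD unfolding def_set_def def_pred_def by blast
  have MN: "eval M (\<phi> k) (\<lambda>i. xs ! i) = eval N (\<phi> k) (\<lambda>i. xs ! i)" if xs: "xs \<in> tuples CM n" for k xs
  proof -
    have e1: "eval S (\<phi> k) (\<lambda>i. xs ! i) = eval S (\<phi> k) (env xs (\<lambda>_. m0))" for S :: "('a,'f,'r) struc"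
      using \<phi> by (intro eval_fv) (auto simp: env_def)
    have "range (env xs (\<lambda>_. m0)) \<subseteq> CM" using xs m0 by (intro env_range) auto
    then show ?thesis unfolding e1 using \<phi> by (intro ee_eval) auto
  qed
  show "def_pred af ar M n dM"
    unfolding def_pred_def
  proof (intro exI[of _ \<phi>] conjI)
    show "\<forall>k. wf_fm af ar (\<phi> k) \<and> fv (\<phi> k) \<subseteq> {..<n}" by (rule \<phi>)
    show "\<forall>e>0. \<exists>K. \<forall>k\<ge>K. \<forall>xs\<in>tuples CM n. \<bar>eval M (\<phi> k) (\<lambda>i. xs ! i) - dM xs\<bar> \<le> e"
    proof (intro allI impI)
      fix e :: real assume "0 < e"
      then obtain K where K: "\<forall>k\<ge>K. \<forall>xs\<in>tuples CN n. \<bar>eval N (\<phi> k) (\<lambda>i. xs ! i) - dN xs\<bar> \<le> e"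
        using c by blast
      have "\<forall>k\<ge>K. \<forall>xs\<in>tuples CM n. \<bar>eval M (\<phi> k) (\<lambda>i. xs ! i) - dM xs\<bar> \<le> e"
        using K MN dist_eq tuples_sub by metis
      then show "\<exists>K. \<forall>k\<ge>K. \<forall>xs\<in>tuples CM n. \<bar>eval M (\<phi> k) (\<lambda>i. xs ! i) - dM xs\<bar> \<le> e" by blast
    qed
  qed
qed

end

lemma teval_expand_fun: "teval (expand S P) = teval S"
  by (auto simp: fun_eq_iff teval_expand)

context setting
begin

lemma approx_seq2: "\<exists>\<psi>. (\<forall>k. wf_fm af ar (\<psi> k) \<and> fv (\<psi> k) \<subseteq> {..<n}) \<and>
   (\<forall>k. \<forall>xs\<in>tuples CN n. \<bar>eval N (\<psi> k) (\<lambda>i. xs ! i) - dN xs\<bar> \<le> inverse (real (Suc k))) \<and>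
   (\<forall>k. \<forall>xs\<in>tuples CM n. \<bar>eval M (\<psi> k) (\<lambda>i. xs ! i) - dM xs\<bar> \<le> inverse (real (Suc k)))"
proof -
  obtain \<psi> where \<psi>: "\<forall>k. wf_fm af ar (\<psi> k) \<and> fv (\<psi> k) \<subseteq> {..<n}"
    and c: "\<forall>k. \<forall>xs\<in>tuples CN n. \<bar>eval N (\<psi> k) (\<lambda>i. xs ! i) - dN xs\<bar> \<le> inverse (real (Suc k))"
    using approx_seq by blast
  have MN: "eval M (\<psi> k) (\<lambda>i. xs ! i) = eval N (\<psi> k) (\<lambda>i. xs ! i)" if xs: "xs \<in> tuples CM n" for k xs
  proof -
    have e1: "eval S (\<psi> k) (\<lambda>i. xs ! i) = eval S (\<psi> k) (env xs (\<lambda>_. m0))" for S :: "('a,'f,'r) struc"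
      using \<psi> by (intro eval_fv) (auto simp: env_def)
    have "range (env xs (\<lambda>_. m0)) \<subseteq> CM" using xs m0 by (intro env_range) auto
    then show ?thesis unfolding e1 using \<psi> by (intro ee_eval) auto
  qed
  have "\<forall>k. \<forall>xs\<in>tuples CM n. \<bar>eval M (\<psi> k) (\<lambda>i. xs ! i) - dM xs\<bar> \<le> inverse (real (Suc k))"
  proof (intro allI ballI)
    fix k xs assume xs: "xs \<in> tuples CM n"
    show "\<bar>eval M (\<psi> k) (\<lambda>i. xs ! i) - dM xs\<bar> \<le> inverse (real (Suc k))"
      using c tuples_sub[OF xs] unfolding MN[OF xs] dist_eq[OF xs, symmetric] by blast
  qed
  then show ?thesis using \<psi> c by blast
qed

abbreviation "EM \<equiv> expand M dM"
abbreviation "EN \<equiv> expand N dN"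

lemma approx_exp:
  fixes \<psi> :: "('f, 'r option) afm"
  shows "wf_fm af (exp_ar ar n) \<psi> \<Longrightarrow> 0 < e \<Longrightarrow> \<exists>ch. wf_fm af ar ch \<and>
    (\<forall>\<rho>. range \<rho> \<subseteq> CM \<longrightarrow> \<bar>eval EM \<psi> \<rho> - eval M ch \<rho>\<bar> \<le> e) \<and>
    (\<forall>\<rho>. range \<rho> \<subseteq> CN \<longrightarrow> \<bar>eval EN \<psi> \<rho> - eval N ch \<rho>\<bar> \<le> e)"
proof (induction \<psi> arbitrary: e)
  case One
  then show ?case by (intro exI[of _ One]) simp
next
  case (Dst t u)
  then show ?case by (intro exI[of _ "Dst t u"]) (simp add: teval_expand_fun expand_simps)
next
  case (Rel r ts)
  show ?case
  proof (cases r)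
    case (Some r')
    then show ?thesis using Rel by (intro exI[of _ "Rel r' ts"]) (simp add: teval_expand_fun expand_simps exp_ar_def comp_def)
  next
    case None
    have lt: "length ts = n" and wt: "\<forall>t\<in>set ts. wf_trm af t" using Rel None by (auto simp: exp_ar_def)
    obtain \<psi> where \<psi>: "\<forall>k. wf_fm af ar (\<psi> k) \<and> fv (\<psi> k) \<subseteq> {..<n}"
      and cN: "\<forall>k. \<forall>xs\<in>tuples CN n. \<bar>eval N (\<psi> k) (\<lambda>i. xs ! i) - dN xs\<bar> \<le> inverse (real (Suc k))"
      and cM: "\<forall>k. \<forall>xs\<in>tuples CM n. \<bar>eval M (\<psi> k) (\<lambda>i. xs ! i) - dM xs\<bar> \<le> inverse (real (Suc k))"
      using approx_seq2 by blast
    obtain k where k: "inverse (real (Suc k)) < e" using reals_Archimedean[OF Rel(2)] by blast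
    obtain ch where ch: "wf_fm af ar ch" and ech: "\<And>(S::('a,'f,'r) struc) \<rho>. eval S ch \<rho> = eval S (\<psi> k) (\<lambda>i. teval S \<rho> (ts ! i))"
      using relnone[OF wt lt, of ar "\<psi> k"] \<psi> by blast
    have ev: "eval S ch \<rho> = eval S (\<psi> k) (\<lambda>i. map (teval S \<rho>) ts ! i)" for S :: "('a,'f,'r) struc" and \<rho>
      unfolding ech
    proof (intro eval_fv ballI)
      fix i assume "i \<in> fv (\<psi> k)"
      then have "i < length ts" using \<psi> lt by blast
      then show "teval S \<rho> (ts ! i) = map (teval S \<rho>) ts ! i" by simp
    qed
    have "\<bar>eval EM (Rel r ts) \<rho> - eval M ch \<rho>\<bar> \<le> e" if r: "range \<rho> \<subseteq> CM" for \<rho>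
    proof -
      have ys: "map (teval M \<rho>) ts \<in> tuples CM n" using map_teval_tuples[OF sM wt r] lt by simp
      have 1: "eval EM (Rel r ts) \<rho> = dM (map (teval M \<rho>) ts)" using None by (simp add: teval_expand_fun expand_simps)
      have 2: "eval M ch \<rho> = eval M (\<psi> k) (\<lambda>i. map (teval M \<rho>) ts ! i)" by (rule ev)
      have 3: "\<bar>eval M (\<psi> k) (\<lambda>i. map (teval M \<rho>) ts ! i) - dM (map (teval M \<rho>) ts)\<bar> \<le> inverse (real (Suc k))"
        using cM ys by blast
      show ?thesis unfolding 1 2 using 3 k by linarith
    qed
    moreover have "\<bar>eval EN (Rel r ts) \<rho> - eval N ch \<rho>\<bar> \<le> e" if r: "range \<rho> \<subseteq> CN" for \<rho>
    proof -
      have ys: "map (teval N \<rho>) ts \<in> tuples CN n" using map_teval_tuples[OF sN wt r] lt by simp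
      have 1: "eval EN (Rel r ts) \<rho> = dN (map (teval N \<rho>) ts)" using None by (simp add: teval_expand_fun expand_simps)
      have 2: "eval N ch \<rho> = eval N (\<psi> k) (\<lambda>i. map (teval N \<rho>) ts ! i)" by (rule ev)
      have 3: "\<bar>eval N (\<psi> k) (\<lambda>i. map (teval N \<rho>) ts ! i) - dN (map (teval N \<rho>) ts)\<bar> \<le> inverse (real (Suc k))"
        using cN ys by blast
      show ?thesis unfolding 1 2 using 3 k by linarith
    qed
    ultimately show ?thesis using ch by blast
  qed
next
  case (Scl c \<psi>)
  have pos: "0 < e / (\<bar>c\<bar> + 1)" using Scl by simp
  have w\<psi>: "wf_fm af (exp_ar ar n) \<psi>" using Scl.prems by simp
  obtain ch where ch: "wf_fm af ar ch"
    and aM: "\<forall>\<rho>. range \<rho> \<subseteq> CM \<longrightarrow> \<bar>eval EM \<psi> \<rho> - eval M ch \<rho>\<bar> \<le> e / (\<bar>c\<bar> + 1)"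
    and aN: "\<forall>\<rho>. range \<rho> \<subseteq> CN \<longrightarrow> \<bar>eval EN \<psi> \<rho> - eval N ch \<rho>\<bar> \<le> e / (\<bar>c\<bar> + 1)"
    using Scl.IH[OF w\<psi> pos] by blast
  have key: "\<bar>c * a - c * b\<bar> \<le> e" if "\<bar>a - b\<bar> \<le> e / (\<bar>c\<bar> + 1)" for a b :: real
  proof -
    have "\<bar>c * a - c * b\<bar> = \<bar>c\<bar> * \<bar>a - b\<bar>" by (simp add: abs_mult[symmetric] algebra_simps)
    also have "\<dots> \<le> \<bar>c\<bar> * (e / (\<bar>c\<bar> + 1))" using that by (intro mult_left_mono) auto
    also have "\<dots> \<le> (\<bar>c\<bar> + 1) * (e / (\<bar>c\<bar> + 1))" using Scl(3) by (intro mult_right_mono) auto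
    also have "\<dots> = e" by simp
    finally show ?thesis .
  qed
  show ?case using ch aM aN key by (intro exI[of _ "Scl c ch"]) auto
next
  case (Pls \<psi>1 \<psi>2)
  have e2: "0 < e / 2" using Pls by simp
  obtain ch1 where ch1: "wf_fm af ar ch1"
    and aM1: "\<forall>\<rho>. range \<rho> \<subseteq> CM \<longrightarrow> \<bar>eval EM \<psi>1 \<rho> - eval M ch1 \<rho>\<bar> \<le> e / 2"
    and aN1: "\<forall>\<rho>. range \<rho> \<subseteq> CN \<longrightarrow> \<bar>eval EN \<psi>1 \<rho> - eval N ch1 \<rho>\<bar> \<le> e / 2"
    using Pls.IH(1)[OF _ e2] Pls.prems by (meson wf_fm.simps(5))
  obtain ch2 where ch2: "wf_fm af ar ch2"
    and aM2: "\<forall>\<rho>. range \<rho> \<subseteq> CM \<longrightarrow> \<bar>eval EM \<psi>2 \<rho> - eval M ch2 \<rho>\<bar> \<le> e / 2"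
    and aN2: "\<forall>\<rho>. range \<rho> \<subseteq> CN \<longrightarrow> \<bar>eval EN \<psi>2 \<rho> - eval N ch2 \<rho>\<bar> \<le> e / 2"
    using Pls.IH(2)[OF _ e2] Pls.prems by (meson wf_fm.simps(5))
  have "wf_fm af ar (Pls ch1 ch2)" using ch1 ch2 by simp
  moreover have "\<forall>\<rho>. range \<rho> \<subseteq> CM \<longrightarrow> \<bar>eval EM (Pls \<psi>1 \<psi>2) \<rho> - eval M (Pls ch1 ch2) \<rho>\<bar> \<le> e"
  proof (intro allI impI)
    fix \<rho> :: "nat \<Rightarrow> 'a" assume "range \<rho> \<subseteq> CM"
    then have h1: "\<bar>eval EM \<psi>1 \<rho> - eval M ch1 \<rho>\<bar> \<le> e / 2" and h2: "\<bar>eval EM \<psi>2 \<rho> - eval M ch2 \<rho>\<bar> \<le> e / 2"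
      using aM1 aM2 by blast+
    then show "\<bar>eval EM (Pls \<psi>1 \<psi>2) \<rho> - eval M (Pls ch1 ch2) \<rho>\<bar> \<le> e" by (simp add: abs_le_iff; linarith)
  qed
  moreover have "\<forall>\<rho>. range \<rho> \<subseteq> CN \<longrightarrow> \<bar>eval EN (Pls \<psi>1 \<psi>2) \<rho> - eval N (Pls ch1 ch2) \<rho>\<bar> \<le> e"
  proof (intro allI impI)
    fix \<rho> :: "nat \<Rightarrow> 'a" assume "range \<rho> \<subseteq> CN"
    then have h1: "\<bar>eval EN \<psi>1 \<rho> - eval N ch1 \<rho>\<bar> \<le> e / 2" and h2: "\<bar>eval EN \<psi>2 \<rho> - eval N ch2 \<rho>\<bar> \<le> e / 2"
      using aN1 aN2 by blast+
    then show "\<bar>eval EN (Pls \<psi>1 \<psi>2) \<rho> - eval N (Pls ch1 ch2) \<rho>\<bar> \<le> e" by (simp add: abs_le_iff; linarith)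
  qed
  ultimately show ?case by blast
next
  case (InfQ x \<psi>)
  obtain ch where ch: "wf_fm af ar ch"
    and aM: "\<forall>\<rho>. range \<rho> \<subseteq> CM \<longrightarrow> \<bar>eval EM \<psi> \<rho> - eval M ch \<rho>\<bar> \<le> e"
    and aN: "\<forall>\<rho>. range \<rho> \<subseteq> CN \<longrightarrow> \<bar>eval EN \<psi> \<rho> - eval N ch \<rho>\<bar> \<le> e"
    using InfQ.IH[OF _ InfQ.prems(2)] InfQ.prems(1) by (meson wf_fm.simps(6))
  have "wf_fm af ar (InfQ x ch)" using ch by simp
  moreover have "\<forall>\<rho>. range \<rho> \<subseteq> CM \<longrightarrow> \<bar>eval EM (InfQ x \<psi>) \<rho> - eval M (InfQ x ch) \<rho>\<bar> \<le> e"
  proof (intro allI impI)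
    fix \<rho> :: "nat \<Rightarrow> 'a" assume r: "range \<rho> \<subseteq> CM"
    have "\<bar>(INF a\<in>CM. eval EM \<psi> (\<rho>(x := a))) - (INF a\<in>CM. eval M ch (\<rho>(x := a)))\<bar> \<le> e"
      by (rule INF_approx[OF struc_ne[OF sM], where b="bnd ch"])
        (use aM r range_upd[OF r] in \<open>auto intro!: eval_bnd[OF sM ch]\<close>)
    then show "\<bar>eval EM (InfQ x \<psi>) \<rho> - eval M (InfQ x ch) \<rho>\<bar> \<le> e" by (simp add: expand_simps)
  qed
  moreover have "\<forall>\<rho>. range \<rho> \<subseteq> CN \<longrightarrow> \<bar>eval EN (InfQ x \<psi>) \<rho> - eval N (InfQ x ch) \<rho>\<bar> \<le> e"
  proof (intro allI impI)
    fix \<rho> :: "nat \<Rightarrow> 'a" assume r: "range \<rho> \<subseteq> CN"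
    have "\<bar>(INF a\<in>CN. eval EN \<psi> (\<rho>(x := a))) - (INF a\<in>CN. eval N ch (\<rho>(x := a)))\<bar> \<le> e"
      by (rule INF_approx[OF struc_ne[OF sN], where b="bnd ch"])
        (use aN r range_upd[OF r] in \<open>auto intro!: eval_bnd[OF sN ch]\<close>)
    then show "\<bar>eval EN (InfQ x \<psi>) \<rho> - eval N (InfQ x ch) \<rho>\<bar> \<le> e" by (simp add: expand_simps)
  qed
  ultimately show ?case by blast
next
  case (SupQ x \<psi>)
  obtain ch where ch: "wf_fm af ar ch"
    and aM: "\<forall>\<rho>. range \<rho> \<subseteq> CM \<longrightarrow> \<bar>eval EM \<psi> \<rho> - eval M ch \<rho>\<bar> \<le> e"
    and aN: "\<forall>\<rho>. range \<rho> \<subseteq> CN \<longrightarrow> \<bar>eval EN \<psi> \<rho> - eval N ch \<rho>\<bar> \<le> e"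
    using SupQ.IH[OF _ SupQ.prems(2)] SupQ.prems(1) by (meson wf_fm.simps(7))
  have "wf_fm af ar (SupQ x ch)" using ch by simp
  moreover have "\<forall>\<rho>. range \<rho> \<subseteq> CM \<longrightarrow> \<bar>eval EM (SupQ x \<psi>) \<rho> - eval M (SupQ x ch) \<rho>\<bar> \<le> e"
  proof (intro allI impI)
    fix \<rho> :: "nat \<Rightarrow> 'a" assume r: "range \<rho> \<subseteq> CM"
    have "\<bar>(SUP a\<in>CM. eval EM \<psi> (\<rho>(x := a))) - (SUP a\<in>CM. eval M ch (\<rho>(x := a)))\<bar> \<le> e"
      by (rule SUP_approx[OF struc_ne[OF sM], where b="bnd ch"])
        (use aM r range_upd[OF r] in \<open>auto intro!: eval_bnd[OF sM ch]\<close>)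
    then show "\<bar>eval EM (SupQ x \<psi>) \<rho> - eval M (SupQ x ch) \<rho>\<bar> \<le> e" by (simp add: expand_simps)
  qed
  moreover have "\<forall>\<rho>. range \<rho> \<subseteq> CN \<longrightarrow> \<bar>eval EN (SupQ x \<psi>) \<rho> - eval N (SupQ x ch) \<rho>\<bar> \<le> e"
  proof (intro allI impI)
    fix \<rho> :: "nat \<Rightarrow> 'a" assume r: "range \<rho> \<subseteq> CN"
    have "\<bar>(SUP a\<in>CN. eval EN \<psi> (\<rho>(x := a))) - (SUP a\<in>CN. eval N ch (\<rho>(x := a)))\<bar> \<le> e"
      by (rule SUP_approx[OF struc_ne[OF sN], where b="bnd ch"])
        (use aN r range_upd[OF r] in \<open>auto intro!: eval_bnd[OF sN ch]\<close>)
    then show "\<bar>eval EN (SupQ x \<psi>) \<rho> - eval N (SupQ x ch) \<rho>\<bar> \<le> e" by (simp add: expand_simps)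
  qed
  ultimately show ?case by blast
qed

lemma part3: "elem_ext af (exp_ar ar n) EM EN"
  unfolding elem_ext_def
proof (intro conjI allI impI)
  show "sc_carrier EM \<subseteq> sc_carrier EN" using sub by (simp add: expand_simps)
  fix \<psi> :: "('f, 'r option) afm" and \<rho> :: "nat \<Rightarrow> 'a" assume h: "wf_fm af (exp_ar ar n) \<psi> \<and> range \<rho> \<subseteq> sc_carrier EM"
  then have w: "wf_fm af (exp_ar ar n) \<psi>" and r: "range \<rho> \<subseteq> CM" by (auto simp: expand_simps)
  have rN: "range \<rho> \<subseteq> CN" using r sub by auto
  have le: "\<bar>eval EM \<psi> \<rho> - eval EN \<psi> \<rho>\<bar> \<le> 2 * e" if e: "0 < e" for e
  proof -
    obtain ch where ch: "wf_fm af ar ch"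
      and aM: "\<forall>\<rho>. range \<rho> \<subseteq> CM \<longrightarrow> \<bar>eval EM \<psi> \<rho> - eval M ch \<rho>\<bar> \<le> e"
      and aN: "\<forall>\<rho>. range \<rho> \<subseteq> CN \<longrightarrow> \<bar>eval EN \<psi> \<rho> - eval N ch \<rho>\<bar> \<le> e"
      using approx_exp[OF w e] by blast
    have "eval M ch \<rho> = eval N ch \<rho>" by (rule ee_eval[OF ch r])
    moreover have "\<bar>eval EM \<psi> \<rho> - eval M ch \<rho>\<bar> \<le> e" using aM r by blast
    moreover have "\<bar>eval EN \<psi> \<rho> - eval N ch \<rho>\<bar> \<le> e" using aN rN by blast
    ultimately show ?thesis by (simp add: abs_le_iff; linarith)
  qed
  show "eval EM \<psi> \<rho> = eval EN \<psi> \<rho>"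
  proof (rule ccontr)
    assume ne: "eval EM \<psi> \<rho> \<noteq> eval EN \<psi> \<rho>"
    then have "0 < \<bar>eval EM \<psi> \<rho> - eval EN \<psi> \<rho>\<bar> / 4" by simp
    from le[OF this] show False using ne by simp
  qed
qed

end

theorem mainTheorem16:
  fixes af :: "'f \<Rightarrow> nat" and ar :: "'r \<Rightarrow> nat"
    and M N :: "('a, 'f, 'r) struc" and n :: nat and D :: "'a list set"
  assumes "is_struc af ar M" and "is_struc af ar N"
    and "elem_ext af ar M N"
    and "ext_sat af ar M"
    and "def_set af ar N n D"
  shows "def_set af ar M n (D \<inter> tuples (sc_carrier M) n)
      \<and> (\<forall>xs\<in>tuples (sc_carrier M) n.
            tsetdist N n D xs = tsetdist M n (D \<inter> tuples (sc_carrier M) n) xs)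
      \<and> elem_ext af (exp_ar ar n)
          (expand M (tsetdist M n (D \<inter> tuples (sc_carrier M) n)))
          (expand N (tsetdist N n D))
      \<and> (D \<noteq> {} \<longrightarrow> D \<inter> tuples (sc_carrier M) n \<noteq> {})"
proof -
  interpret setting af ar M N n D
    using assms by (unfold_locales) auto
  show ?thesis using part1 dist_eq part3 CC_ne by blast
qed

end
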